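(* For $n\in\mathbb{N}$, let $f(n)\in\mathbb{N}\cup\{+\infty\}$ denote the largest number (supremum) of pairwise inequivalent nice bases that a real nilpotent Lie algebra of dimension $n$ can carry. Then the function $f\colon\mathbb{N}\to\mathbb{N}\cup\{+\infty\}$ is nondecreasing and unbounded; more precisely, for every $n$, \[f(n)\geq \left\lfloor\frac n6\right\rfloor+1.\]
   Context: Let $\mathfrak{g}$ be a real Lie algebra with basis $\mathcal B=\{e_1,\dots,e_n\}$ and dual basis $\{e^1,\dots,e^n\}$, and let $d$ denote the Chevalley–Eilenberg differential ($de^k(x,y)=-e^k([x,y])$). The basis $\mathcal B$ is called nice if (i) for all $i,j$, $[e_i,e_j]$ is a (possibly zero) multiple of some element of $\mathcal B$, and (ii) for all $i,j$, the contraction $e_i\lrcorner\, de^j$ is a multiple of some element of $\{e^1,\dots,e^n\}$. Two nice bases $\mathcal B_1$ of $\mathfrak{g}_1$ and $\mathcal B_2$ of $\mathfrak{g}_2$ are equivalent if there is a Lie algebra isomorphism $\mathfrak{g}_1\to\mathfrak{g}_2$ mapping each element of $\mathcal B_1$ to a multiple of an element of $\mathcal B_2$. *)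

theory Defs
  imports Complex_Main "HOL-Library.Extended_Nat"
begin

text \<open>Vectors of the n-dimensional real space are modelled as functions
  nat \<Rightarrow> real vanishing outside {..<n}. Vector operations are written pointwise.\<close>

type_synonym vec = "nat \<Rightarrow> real"

definition Vsp :: "nat \<Rightarrow> vec set" where
  "Vsp n = {v. \<forall>i\<ge>n. v i = 0}"

definition vadd :: "vec \<Rightarrow> vec \<Rightarrow> vec" where
  "vadd v w = (\<lambda>i. v i + w i)"

definition vscale :: "real \<Rightarrow> vec \<Rightarrow> vec" where
  "vscale a v = (\<lambda>i. a * v i)"

definition vzero :: vec where
  "vzero = (\<lambda>i. 0)"

definition is_lie_algebra :: "nat \<Rightarrow> (vec \<Rightarrow> vec \<Rightarrow> vec) \<Rightarrow> bool" where
  "is_lie_algebra n br \<longleftrightarrow>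
     (\<forall>x\<in>Vsp n. \<forall>y\<in>Vsp n. br x y \<in> Vsp n) \<and>
     (\<forall>a x y z. x \<in> Vsp n \<longrightarrow> y \<in> Vsp n \<longrightarrow> z \<in> Vsp n \<longrightarrow>
        br (vadd (vscale a x) y) z = vadd (vscale a (br x z)) (br y z) \<and>
        br z (vadd (vscale a x) y) = vadd (vscale a (br z x)) (br z y)) \<and>
     (\<forall>x\<in>Vsp n. br x x = vzero) \<and>
     (\<forall>x\<in>Vsp n. \<forall>y\<in>Vsp n. \<forall>z\<in>Vsp n.
        vadd (vadd (br x (br y z)) (br y (br z x))) (br z (br x y)) = vzero)"

fun nested_br :: "(vec \<Rightarrow> vec \<Rightarrow> vec) \<Rightarrow> vec list \<Rightarrow> vec \<Rightarrow> vec" where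
  "nested_br br [] x = x"
| "nested_br br (y # ys) x = br y (nested_br br ys x)"

text \<open>Nilpotent: some term of the lower central series vanishes, i.e. all
  iterated brackets of a fixed length vanish.\<close>
definition nilpotent_lie :: "nat \<Rightarrow> (vec \<Rightarrow> vec \<Rightarrow> vec) \<Rightarrow> bool" where
  "nilpotent_lie n br \<longleftrightarrow>
     (\<exists>k. \<forall>ys x. length ys = k \<longrightarrow> set ys \<subseteq> Vsp n \<longrightarrow> x \<in> Vsp n \<longrightarrow>
         nested_br br ys x = vzero)"

definition lin_comb :: "nat \<Rightarrow> (nat \<Rightarrow> vec) \<Rightarrow> (nat \<Rightarrow> real) \<Rightarrow> vec" where
  "lin_comb n b a = (\<lambda>j. \<Sum>i<n. a i * b i j)"

definition is_basis :: "nat \<Rightarrow> (nat \<Rightarrow> vec) \<Rightarrow> bool" where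
  "is_basis n b \<longleftrightarrow> (\<forall>i<n. b i \<in> Vsp n) \<and>
     (\<forall>v\<in>Vsp n. \<exists>!a. (\<forall>i\<ge>n. a i = 0) \<and> v = lin_comb n b a)"

definition coord :: "nat \<Rightarrow> (nat \<Rightarrow> vec) \<Rightarrow> nat \<Rightarrow> vec \<Rightarrow> real" where
  "coord n b j v = (THE a. (\<forall>i\<ge>n. a i = 0) \<and> v = lin_comb n b a) j"

text \<open>Nice basis: (i) brackets of basis elements are multiples of basis elements;
  (ii) each contraction e_i \<lrcorner> de^j, i.e. the form x \<mapsto> -e^j([e_i,x]),
  is a multiple of some dual basis element e^k.\<close>
definition nice_basis :: "nat \<Rightarrow> (vec \<Rightarrow> vec \<Rightarrow> vec) \<Rightarrow> (nat \<Rightarrow> vec) \<Rightarrow> bool" where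
  "nice_basis n br b \<longleftrightarrow> is_basis n b \<and>
     (\<forall>i<n. \<forall>j<n. \<exists>k<n. \<exists>c. br (b i) (b j) = vscale c (b k)) \<and>
     (\<forall>i<n. \<forall>j<n. \<exists>k<n. \<exists>c. \<forall>x\<in>Vsp n.
         - coord n b j (br (b i) x) = c * coord n b k x)"

definition lie_iso :: "nat \<Rightarrow> (vec \<Rightarrow> vec \<Rightarrow> vec) \<Rightarrow> (vec \<Rightarrow> vec \<Rightarrow> vec) \<Rightarrow> (vec \<Rightarrow> vec) \<Rightarrow> bool" where
  "lie_iso n br1 br2 \<phi> \<longleftrightarrow> bij_betw \<phi> (Vsp n) (Vsp n) \<and>
     (\<forall>a x y. x \<in> Vsp n \<longrightarrow> y \<in> Vsp n \<longrightarrow> \<phi> (vadd (vscale a x) y) = vadd (vscale a (\<phi> x)) (\<phi> y)) \<and>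
     (\<forall>x\<in>Vsp n. \<forall>y\<in>Vsp n. \<phi> (br1 x y) = br2 (\<phi> x) (\<phi> y))"

definition equiv_nice :: "nat \<Rightarrow> (vec \<Rightarrow> vec \<Rightarrow> vec) \<Rightarrow> (nat \<Rightarrow> vec) \<Rightarrow>
    (vec \<Rightarrow> vec \<Rightarrow> vec) \<Rightarrow> (nat \<Rightarrow> vec) \<Rightarrow> bool" where
  "equiv_nice n br1 b1 br2 b2 \<longleftrightarrow>
     (\<exists>\<phi>. lie_iso n br1 br2 \<phi> \<and> (\<forall>i<n. \<exists>k<n. \<exists>c. \<phi> (b1 i) = vscale c (b2 k)))"

text \<open>f(n): supremum of the number of pairwise inequivalent nice bases of a
  real nilpotent Lie algebra of dimension n (every such algebra is isomorphic to
  one on the model space Vsp n).\<close>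
definition max_nice :: "nat \<Rightarrow> enat" where
  "max_nice n = Sup {enat (card S) | S br.
      is_lie_algebra n br \<and> nilpotent_lie n br \<and> finite S \<and>
      (\<forall>b\<in>S. nice_basis n br b) \<and>
      (\<forall>b1\<in>S. \<forall>b2\<in>S. b1 \<noteq> b2 \<longrightarrow> \<not> equiv_nice n br b1 br b2)}"

end

theory Submission
  imports Defs
begin


lemma vadd_apply[simp]: "vadd v w i = v i + w i" by (simp add: vadd_def)
lemma vscale_apply[simp]: "vscale a v i = a * v i" by (simp add: vscale_def)
lemma vzero_apply[simp]: "vzero i = 0" by (simp add: vzero_def)
lemma Vsp_iff: "v \<in> Vsp n \<longleftrightarrow> (\<forall>i\<ge>n. v i = 0)" by (simp add: Vsp_def)
lemma lin_comb_apply: "lin_comb n b a j = (\<Sum>i<n. a i * b i j)" by (simp add: lin_comb_def)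

lemma Vsp_mono: "v \<in> Vsp n \<Longrightarrow> n \<le> m \<Longrightarrow> v \<in> Vsp m" by (simp add: Vsp_def)
lemma vzero_Vsp[simp]: "vzero \<in> Vsp n" by (simp add: Vsp_def)
lemma vadd_Vsp[intro]: "v \<in> Vsp n \<Longrightarrow> w \<in> Vsp n \<Longrightarrow> vadd v w \<in> Vsp n" by (simp add: Vsp_def)
lemma vscale_Vsp[intro]: "v \<in> Vsp n \<Longrightarrow> vscale c v \<in> Vsp n" by (simp add: Vsp_def)

lemma lin_comb_Vsp: "(\<And>i. i < m \<Longrightarrow> b i \<in> Vsp n) \<Longrightarrow> lin_comb m b a \<in> Vsp n"
  by (auto simp: Vsp_def lin_comb_def intro!: sum.neutral)

lemma lin_comb_Suc: "lin_comb (Suc m) b a = vadd (lin_comb m b a) (vscale (a m) (b m))"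
  by (simp add: lin_comb_def vadd_def vscale_def fun_eq_iff)

lemma lin_comb_cong: "(\<And>i. i < m \<Longrightarrow> a i = a' i) \<Longrightarrow> lin_comb m b a = lin_comb m b a'"
  by (auto simp: lin_comb_def fun_eq_iff intro!: sum.cong)

definition flin :: "nat \<Rightarrow> (vec \<Rightarrow> real) \<Rightarrow> bool" where
  "flin n g \<longleftrightarrow> (\<forall>c x y. x \<in> Vsp n \<longrightarrow> y \<in> Vsp n \<longrightarrow> g (vadd (vscale c x) y) = c * g x + g y)"

lemma flin_zero: assumes "flin n g" shows "g vzero = 0"
proof -
  have "vadd (vscale 1 vzero) vzero = vzero" by (simp add: fun_eq_iff)
  then have "g vzero = 1 * g vzero + g vzero" using assms unfolding flin_def
    by (metis vzero_Vsp)
  then show ?thesis by simp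
qed

lemma flin_lin_comb:
  assumes "flin n g" "m \<le> n" "\<And>i. i < n \<Longrightarrow> b i \<in> Vsp n"
  shows "g (lin_comb m b a) = (\<Sum>i<m. a i * g (b i))"
  using assms(2)
proof (induction m)
  case 0
  have "lin_comb 0 b a = vzero" by (simp add: lin_comb_def fun_eq_iff)
  moreover have "(\<Sum>i<(0::nat). a i * g (b i)) = 0" by simp
  ultimately show ?case using flin_zero[OF assms(1)] by metis
next
  case (Suc m)
  have bm: "b m \<in> Vsp n" using Suc assms by simp
  have lc: "lin_comb m b a \<in> Vsp n" using Suc assms by (intro lin_comb_Vsp) auto
  have "lin_comb (Suc m) b a = vadd (vscale (a m) (b m)) (lin_comb m b a)"
    by (simp add: lin_comb_Suc fun_eq_iff)
  then have "g (lin_comb (Suc m) b a) = a m * g (b m) + g (lin_comb m b a)"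
    using assms(1) bm lc unfolding flin_def by simp
  then show ?case using Suc by simp
qed

definition vlin :: "nat \<Rightarrow> (vec \<Rightarrow> vec) \<Rightarrow> bool" where
  "vlin n f \<longleftrightarrow> (\<forall>c x y. x \<in> Vsp n \<longrightarrow> y \<in> Vsp n \<longrightarrow> f (vadd (vscale c x) y) = vadd (vscale c (f x)) (f y))"

lemma vlin_flin: "vlin n f \<Longrightarrow> flin n (\<lambda>x. f x q)"
  by (simp add: vlin_def flin_def)

lemma vlin_zero: "vlin n f \<Longrightarrow> f vzero = vzero"
  using flin_zero[OF vlin_flin] by (auto simp: fun_eq_iff)

lemma vlin_scale: assumes "vlin n f" "x \<in> Vsp n" shows "f (vscale c x) = vscale c (f x)"
proof -
  have "vadd (vscale c x) vzero = vscale c x" by (simp add: fun_eq_iff)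
  then show ?thesis using assms vlin_zero[OF assms(1)] unfolding vlin_def
    by (metis vzero_Vsp vadd_apply add_0_right ext vzero_apply)
qed

lemma vlin_add: assumes "vlin n f" "x \<in> Vsp n" "y \<in> Vsp n" shows "f (vadd x y) = vadd (f x) (f y)"
proof -
  have "vadd (vscale 1 x) y = vadd x y" by (simp add: fun_eq_iff)
  moreover have "vscale 1 (f x) = f x" by (simp add: fun_eq_iff)
  ultimately show ?thesis using assms unfolding vlin_def by metis
qed

lemma vlin_lin_comb:
  assumes "vlin n f" "m \<le> n" "\<And>i. i < n \<Longrightarrow> b i \<in> Vsp n"
  shows "f (lin_comb m b a) = lin_comb m (\<lambda>i. f (b i)) a"
  using flin_lin_comb[OF vlin_flin[OF assms(1)] assms(2,3)] by (simp add: fun_eq_iff lin_comb_def)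

lemma basis_coord:
  assumes "is_basis n b" "v \<in> Vsp n"
  shows "(\<forall>i\<ge>n. coord n b i v = 0) \<and> v = lin_comb n b (\<lambda>i. coord n b i v)"
proof -
  have ex: "\<exists>!a. (\<forall>i\<ge>n. a i = 0) \<and> v = lin_comb n b a" using assms unfolding is_basis_def by blast
  show ?thesis using theI'[OF ex] unfolding coord_def by simp
qed

lemma coord_unique:
  assumes "is_basis n b" "\<forall>i\<ge>n. a i = 0" "v = lin_comb n b a"
  shows "coord n b j v = a j"
proof -
  have v: "v \<in> Vsp n" using assms unfolding is_basis_def by (auto intro: lin_comb_Vsp)
  have ex: "\<exists>!a. (\<forall>i\<ge>n. a i = 0) \<and> v = lin_comb n b a" using assms v unfolding is_basis_def by blast
  have "(THE a. (\<forall>i\<ge>n. a i = 0) \<and> v = lin_comb n b a) = a"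
    using assms by (intro the1_equality[OF ex]) auto
  then show ?thesis by (simp add: coord_def)
qed

lemma basis_Vsp: "is_basis n b \<Longrightarrow> i < n \<Longrightarrow> b i \<in> Vsp n"
  by (simp add: is_basis_def)

lemma lin_comb_delta: assumes "k < m" shows "lin_comb m b (\<lambda>i. if i = k then 1 else 0) = b k"
proof (rule ext)
  fix x
  have "(\<Sum>i<m. (if i = k then 1 else 0) * b i x) = (\<Sum>i<m. if i = k then b i x else 0)"
    by (rule sum.cong) auto
  also have "\<dots> = b k x" using assms by (simp add: sum.delta)
  finally show "lin_comb m b (\<lambda>i. if i = k then 1 else 0) x = b k x" by (simp add: lin_comb_def)
qed

lemma coord_basis:
  assumes "is_basis n b" "k < n"
  shows "coord n b j (b k) = (if j = k then 1 else 0)"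
  using coord_unique[OF assms(1), of "\<lambda>i. if i = k then 1 else 0" "b k" j] assms(2)
  by (simp add: lin_comb_delta)

lemma lin_comb_lin: "lin_comb m b (\<lambda>i. c * a i + a' i) = vadd (vscale c (lin_comb m b a)) (lin_comb m b a')"
  by (simp add: lin_comb_def fun_eq_iff sum.distrib sum_distrib_left algebra_simps)

lemma coord_flin: assumes "is_basis n b" shows "flin n (coord n b j)"
  unfolding flin_def
proof (intro allI impI)
  fix c x y assume x: "x \<in> Vsp n" and y: "y \<in> Vsp n"
  note X = basis_coord[OF assms x] and Y = basis_coord[OF assms y]
  have "vadd (vscale c x) y = lin_comb n b (\<lambda>i. c * coord n b i x + coord n b i y)"
    using X Y by (metis lin_comb_lin)
  then show "coord n b j (vadd (vscale c x) y) = c * coord n b j x + coord n b j y"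
    using X Y by (subst coord_unique[OF assms]) auto
qed

lemma basis_nonzero: assumes "is_basis n b" "k < n" shows "b k \<noteq> vzero"
proof
  assume "b k = vzero"
  then have "coord n b k (b k) = 0" using flin_zero[OF coord_flin[OF assms(1)]] by simp
  then show False using coord_basis[OF assms] by simp
qed


lemma flin_scale: assumes "flin n g" "x \<in> Vsp n" shows "g (vscale c x) = c * g x"
proof -
  have "vadd (vscale c x) vzero = vscale c x" by (simp add: fun_eq_iff)
  then show ?thesis using assms flin_zero[OF assms(1)] unfolding flin_def by (metis vzero_Vsp add_0_right)
qed

context fixes n br assumes L: "is_lie_algebra n br"
begin
lemma br_Vsp: "x \<in> Vsp n \<Longrightarrow> y \<in> Vsp n \<Longrightarrow> br x y \<in> Vsp n"
  using L by (simp add: is_lie_algebra_def)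
lemma br_vlin_r: "z \<in> Vsp n \<Longrightarrow> vlin n (br z)"
  using L by (simp add: is_lie_algebra_def vlin_def)
lemma br_vlin_l: "z \<in> Vsp n \<Longrightarrow> vlin n (\<lambda>x. br x z)"
  using L by (simp add: is_lie_algebra_def vlin_def)
lemma br_alt: "x \<in> Vsp n \<Longrightarrow> br x x = vzero"
  using L by (simp add: is_lie_algebra_def)
lemma br_zero_l: "z \<in> Vsp n \<Longrightarrow> br vzero z = vzero"
  using vlin_zero[OF br_vlin_l] by blast
lemma br_zero_r: "z \<in> Vsp n \<Longrightarrow> br z vzero = vzero"
  using vlin_zero[OF br_vlin_r] by blast
lemma br_scale_l: "x \<in> Vsp n \<Longrightarrow> z \<in> Vsp n \<Longrightarrow> br (vscale c x) z = vscale c (br x z)"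
  using vlin_scale[OF br_vlin_l] by blast
lemma br_scale_r: "x \<in> Vsp n \<Longrightarrow> z \<in> Vsp n \<Longrightarrow> br z (vscale c x) = vscale c (br z x)"
  using vlin_scale[OF br_vlin_r] by blast
lemma br_add_l: "x \<in> Vsp n \<Longrightarrow> y \<in> Vsp n \<Longrightarrow> z \<in> Vsp n \<Longrightarrow> br (vadd x y) z = vadd (br x z) (br y z)"
  using vlin_add[OF br_vlin_l] by blast
lemma br_add_r: "x \<in> Vsp n \<Longrightarrow> y \<in> Vsp n \<Longrightarrow> z \<in> Vsp n \<Longrightarrow> br z (vadd x y) = vadd (br z x) (br z y)"
  using vlin_add[OF br_vlin_r] by blast
lemma br_antisym: assumes "x \<in> Vsp n" "y \<in> Vsp n" shows "br x y = vscale (-1) (br y x)"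
proof -
  have s: "vadd x y \<in> Vsp n" using assms by auto
  have "vzero = br (vadd x y) (vadd x y)" using br_alt[OF s] by simp
  also have "\<dots> = vadd (vadd (br x x) (br y x)) (vadd (br x y) (br y y))"
    using assms s by (simp add: br_add_l br_add_r)
  finally have h0: "\<forall>q. br y x q + br x y q = 0" using assms by (simp add: br_alt fun_eq_iff)
  show ?thesis
  proof (rule ext)
    fix q from h0 have "br y x q + br x y q = 0" by blast
    then show "br x y q = vscale (-1) (br y x) q" by simp
  qed
qed
end

lemma nice_from_table:
  assumes L: "is_lie_algebra n br" and B: "is_basis n b"
    and T: "\<And>i l. i < n \<Longrightarrow> l < n \<Longrightarrow> t i l < n \<and> br (b i) (b l) = vscale (s i l) (b (t i l))"
    and I: "\<And>i l l'. i < n \<Longrightarrow> l < n \<Longrightarrow> l' < n \<Longrightarrow> s i l \<noteq> 0 \<Longrightarrow> s i l' \<noteq> 0 \<Longrightarrow> t i l = t i l' \<Longrightarrow> l = l'"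
  shows "nice_basis n br b"
  unfolding nice_basis_def
proof (intro conjI B allI impI)
  fix i j assume "i < n" "j < n"
  then show "\<exists>k<n. \<exists>c. br (b i) (b j) = vscale c (b k)" using T by blast
next
  fix i j assume i: "i < n" and j: "j < n"
  have bi: "b i \<in> Vsp n" using B i by (rule basis_Vsp)
  have g: "flin n (\<lambda>x. coord n b j (br (b i) x))"
    unfolding flin_def
  proof (intro allI impI)
    fix c x y assume x: "x \<in> Vsp n" and y: "y \<in> Vsp n"
    have "br (b i) (vadd (vscale c x) y) = vadd (vscale c (br (b i) x)) (br (b i) y)"
      using br_vlin_r[OF L bi] x y unfolding vlin_def by blast
    moreover have "br (b i) x \<in> Vsp n" "br (b i) y \<in> Vsp n" using br_Vsp[OF L bi] x y by auto
    ultimately show "coord n b j (br (b i) (vadd (vscale c x) y)) = c * coord n b j (br (b i) x) + coord n b j (br (b i) y)"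
      using coord_flin[OF B, of j] unfolding flin_def by simp
  qed
  have val: "coord n b j (br (b i) (b l)) = (if t i l = j then s i l else 0)" if "l < n" for l
  proof -
    have tl: "t i l < n" and e: "br (b i) (b l) = vscale (s i l) (b (t i l))" using T[OF i that] by auto
    have "coord n b j (br (b i) (b l)) = s i l * coord n b j (b (t i l))"
      unfolding e by (rule flin_scale[OF coord_flin[OF B] basis_Vsp[OF B tl]])
    also have "\<dots> = (if t i l = j then s i l else 0)" unfolding coord_basis[OF B tl] by simp
    finally show ?thesis .
  qed
  have exp: "coord n b j (br (b i) x) = (\<Sum>l<n. coord n b l x * (if t i l = j then s i l else 0))"
    if x: "x \<in> Vsp n" for x
  proof -
    have "coord n b j (br (b i) x) = coord n b j (br (b i) (lin_comb n b (\<lambda>l. coord n b l x)))"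
      using basis_coord[OF B x] by simp
    also have "\<dots> = (\<Sum>l<n. coord n b l x * coord n b j (br (b i) (b l)))"
      using flin_lin_comb[OF g order_refl basis_Vsp[OF B]] by simp
    finally show ?thesis using val by simp
  qed
  show "\<exists>k<n. \<exists>c. \<forall>x\<in>Vsp n. - coord n b j (br (b i) x) = c * coord n b k x"
  proof (cases "\<exists>l<n. s i l \<noteq> 0 \<and> t i l = j")
    case True
    then obtain k where k: "k < n" "s i k \<noteq> 0" "t i k = j" by blast
    have "\<forall>x\<in>Vsp n. - coord n b j (br (b i) x) = (- s i k) * coord n b k x"
    proof
      fix x assume x: "x \<in> Vsp n"
      have "(\<Sum>l<n. coord n b l x * (if t i l = j then s i l else 0))
           = (\<Sum>l<n. if l = k then coord n b k x * s i k else 0)"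
      proof (rule sum.cong)
        fix l assume "l \<in> {..<n}"
        then show "coord n b l x * (if t i l = j then s i l else 0) = (if l = k then coord n b k x * s i k else 0)"
        proof (cases "l = k")
          case False
          have "l < n" using \<open>l \<in> {..<n}\<close> by simp
          then have "\<not> (s i l \<noteq> 0 \<and> t i l = j)" using I[OF i \<open>l < n\<close> k(1) _ k(2)] k(3) False by metis
          then show ?thesis using False by auto
        qed (use k in simp)
      qed simp
      also have "\<dots> = coord n b k x * s i k" using k by (simp add: sum.delta)
      finally show "- coord n b j (br (b i) x) = (- s i k) * coord n b k x" using exp[OF x] by simp
    qed
    then show ?thesis using k by blast
  next
    case False
    have "\<forall>x\<in>Vsp n. - coord n b j (br (b i) x) = 0 * coord n b 0 x"
    proof
      fix x assume x: "x \<in> Vsp n"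
      have "(\<Sum>l<n. coord n b l x * (if t i l = j then s i l else 0)) = 0"
        using False by (intro sum.neutral) auto
      then show "- coord n b j (br (b i) x) = 0 * coord n b 0 x" using exp[OF x] by simp
    qed
    moreover have "0 < n" using i by simp
    ultimately show ?thesis by blast
  qed
qed


lemma lie_iso_vlin: "lie_iso n br1 br2 \<phi> \<Longrightarrow> vlin n \<phi>"
  by (simp add: lie_iso_def vlin_def)

lemma lie_iso_inj: "lie_iso n br1 br2 \<phi> \<Longrightarrow> x \<in> Vsp n \<Longrightarrow> y \<in> Vsp n \<Longrightarrow> \<phi> x = \<phi> y \<Longrightarrow> x = y"
  by (auto simp: lie_iso_def bij_betw_def inj_on_def)

lemma iso_perm:
  assumes F: "lie_iso n br1 br2 \<phi>" and B1: "is_basis n b1" and B2: "is_basis n b2"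
    and S: "\<And>i. i < n \<Longrightarrow> \<sigma> i < n \<and> \<phi> (b1 i) = vscale (c i) (b2 (\<sigma> i))"
  shows "(\<forall>i<n. c i \<noteq> 0) \<and> inj_on \<sigma> {..<n} \<and> \<sigma> ` {..<n} = {..<n}"
proof -
  note V = lie_iso_vlin[OF F]
  have c: "c i \<noteq> 0" if i: "i < n" for i
  proof
    assume "c i = 0"
    moreover have "\<phi> (b1 i) = vscale (c i) (b2 (\<sigma> i))" using S[OF i] by simp
    ultimately have "\<phi> (b1 i) = \<phi> vzero" using vlin_zero[OF V] by (simp add: vscale_def vzero_def)
    then show False using lie_iso_inj[OF F basis_Vsp[OF B1 i] vzero_Vsp] basis_nonzero[OF B1 i] by simp
  qed
  have inj: "inj_on \<sigma> {..<n}"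
  proof (rule inj_onI)
    fix i i' assume i: "i \<in> {..<n}" and i': "i' \<in> {..<n}" and e: "\<sigma> i = \<sigma> i'"
    have v1: "b1 i \<in> Vsp n" "b1 i' \<in> Vsp n" using i i' basis_Vsp[OF B1] by auto
    have s1: "\<phi> (b1 i) = vscale (c i) (b2 (\<sigma> i))" and s2: "\<phi> (b1 i') = vscale (c i') (b2 (\<sigma> i))"
      using S i i' e by auto
    have "\<phi> (vscale (c i') (b1 i)) = vscale (c i') (vscale (c i) (b2 (\<sigma> i)))"
      using vlin_scale[OF V v1(1)] s1 by simp
    also have "\<dots> = vscale (c i) (vscale (c i') (b2 (\<sigma> i)))" by (simp add: fun_eq_iff)
    also have "\<dots> = \<phi> (vscale (c i) (b1 i'))" using vlin_scale[OF V v1(2)] s2 by simp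
    finally have "\<phi> (vscale (c i') (b1 i)) = \<phi> (vscale (c i) (b1 i'))" .
    then have "vscale (c i') (b1 i) = vscale (c i) (b1 i')"
      using lie_iso_inj[OF F vscale_Vsp[OF v1(1)] vscale_Vsp[OF v1(2)]] by simp
    then have "coord n b1 i (vscale (c i') (b1 i)) = coord n b1 i (vscale (c i) (b1 i'))" by simp
    then have "c i' = c i * (if i = i' then 1 else 0)"
      using flin_scale[OF coord_flin[OF B1]] v1 coord_basis[OF B1] i i' by simp
    then show "i = i'" using c i' by (auto split: if_splits)
  qed
  have "\<sigma> ` {..<n} = {..<n}"
    using S by (intro endo_inj_surj[OF _ _ inj]) auto
  then show ?thesis using c inj by auto
qed

lemma vscale_eq_zero: "d \<noteq> 0 \<Longrightarrow> vscale d X = vzero \<longleftrightarrow> X = vzero"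
  by (auto simp: fun_eq_iff)

definition npairs :: "nat \<Rightarrow> (vec \<Rightarrow> vec \<Rightarrow> vec) \<Rightarrow> (nat \<Rightarrow> vec) \<Rightarrow> nat" where
  "npairs n br b = card {(i,l). i < n \<and> l < n \<and> br (b i) (b l) \<noteq> vzero}"

lemma equiv_npairs:
  assumes L: "is_lie_algebra n br" and B1: "is_basis n b1" and B2: "is_basis n b2"
    and E: "equiv_nice n br b1 br b2"
  shows "npairs n br b1 = npairs n br b2"
proof -
  obtain \<phi> where F: "lie_iso n br br \<phi>" and M: "\<forall>i<n. \<exists>k<n. \<exists>c. \<phi> (b1 i) = vscale c (b2 k)"
    using E unfolding equiv_nice_def by blast
  have "\<forall>i. \<exists>p. i < n \<longrightarrow> fst p < n \<and> \<phi> (b1 i) = vscale (snd p) (b2 (fst p))"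
    using M by fastforce
  then obtain f where f: "\<forall>i. i < n \<longrightarrow> fst (f i) < n \<and> \<phi> (b1 i) = vscale (snd (f i)) (b2 (fst (f i)))"
    by (rule choice[THEN exE]) blast
  define \<sigma> where "\<sigma> i = fst (f i)" for i
  define c where "c i = snd (f i)" for i
  have S: "\<And>i. i < n \<Longrightarrow> \<sigma> i < n \<and> \<phi> (b1 i) = vscale (c i) (b2 (\<sigma> i))"
    using f by (simp add: \<sigma>_def c_def)
  note P = iso_perm[OF F B1 B2 S]
  define P1 where "P1 = {(i,l). i < n \<and> l < n \<and> br (b1 i) (b1 l) \<noteq> vzero}"
  define P2 where "P2 = {(i,l). i < n \<and> l < n \<and> br (b2 i) (b2 l) \<noteq> vzero}"
  have key: "br (b1 i) (b1 l) \<noteq> vzero \<longleftrightarrow> br (b2 (\<sigma> i)) (b2 (\<sigma> l)) \<noteq> vzero" if "i < n" "l < n" for i l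
  proof -
    have v: "b1 i \<in> Vsp n" "b1 l \<in> Vsp n" "b2 (\<sigma> i) \<in> Vsp n" "b2 (\<sigma> l) \<in> Vsp n"
      using that S basis_Vsp[OF B1] basis_Vsp[OF B2] by auto
    have "\<phi> (br (b1 i) (b1 l)) = br (\<phi> (b1 i)) (\<phi> (b1 l))" using F v unfolding lie_iso_def by blast
    also have "\<dots> = br (vscale (c i) (b2 (\<sigma> i))) (vscale (c l) (b2 (\<sigma> l)))"
      using S[OF that(1)] S[OF that(2)] by simp
    also have "\<dots> = vscale (c i) (vscale (c l) (br (b2 (\<sigma> i)) (b2 (\<sigma> l))))"
      using br_scale_l[OF L, of "b2 (\<sigma> i)" "vscale (c l) (b2 (\<sigma> l))" "c i"]
        br_scale_r[OF L, of "b2 (\<sigma> l)" "b2 (\<sigma> i)" "c l"] v by auto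
    also have "\<dots> = vscale (c i * c l) (br (b2 (\<sigma> i)) (b2 (\<sigma> l)))"
      by (simp add: fun_eq_iff)
    finally have e: "\<phi> (br (b1 i) (b1 l)) = vscale (c i * c l) (br (b2 (\<sigma> i)) (b2 (\<sigma> l)))" .
    have cc: "c i * c l \<noteq> 0" using P that by auto
    have "br (b1 i) (b1 l) = vzero \<longleftrightarrow> \<phi> (br (b1 i) (b1 l)) = \<phi> vzero"
      using lie_iso_inj[OF F br_Vsp[OF L v(1,2)] vzero_Vsp] by auto
    also have "\<dots> \<longleftrightarrow> br (b2 (\<sigma> i)) (b2 (\<sigma> l)) = vzero"
      using e vscale_eq_zero[OF cc] vlin_zero[OF lie_iso_vlin[OF F]] by simp
    finally show ?thesis by simp
  qed
  have inj2: "inj_on (\<lambda>(i,l). (\<sigma> i, \<sigma> l)) P1"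
    using P by (auto simp: inj_on_def P1_def)
  have img: "(\<lambda>(i,l). (\<sigma> i, \<sigma> l)) ` P1 = P2"
  proof
    show "(\<lambda>(i,l). (\<sigma> i, \<sigma> l)) ` P1 \<subseteq> P2" using key S by (auto simp: P1_def P2_def)
  next
    show "P2 \<subseteq> (\<lambda>(i,l). (\<sigma> i, \<sigma> l)) ` P1"
    proof
      fix p assume p: "p \<in> P2"
      obtain i' l' where pe: "p = (i', l')" "i' < n" "l' < n" using p by (auto simp: P2_def)
      have "i' \<in> \<sigma> ` {..<n}" "l' \<in> \<sigma> ` {..<n}" using P pe by auto
      then obtain i l where il: "i < n" "l < n" "\<sigma> i = i'" "\<sigma> l = l'" by blast
      have "br (b2 i') (b2 l') \<noteq> vzero" using p pe by (simp add: P2_def)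
      then have "(i,l) \<in> P1" using key[OF il(1,2)] il by (simp add: P1_def)
      then show "p \<in> (\<lambda>(i,l). (\<sigma> i, \<sigma> l)) ` P1" using pe il by (intro image_eqI[of _ _ "(i,l)"]) auto
    qed
  qed
  have "card P1 = card P2" using card_image[OF inj2] img by simp
  then show ?thesis by (simp add: npairs_def P1_def P2_def)
qed


lemma all6: "(\<forall>r<(6::nat). P r) \<longleftrightarrow> P 0 \<and> P 1 \<and> P 2 \<and> P 3 \<and> P 4 \<and> P 5"
proof -
  have "{..<6::nat} = {0,1,2,3,4,5}" by auto
  then show ?thesis by (metis lessThan_iff insert_iff empty_iff)
qed
lemma sum6: "(\<Sum>r<(6::nat). g r) = g 0 + g 1 + g 2 + g 3 + g 4 + (g 5 :: real)"
  by (simp add: numeral_eq_Suc)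
lemma divmod6: "r < 6 \<Longrightarrow> (6 * m + r) div 6 = (m::nat) \<and> (6 * m + r) mod 6 = r"
  by auto

lemma block_sum:
  fixes m k :: nat and f :: "nat \<Rightarrow> real"
  assumes "m < k" "\<And>i. i div 6 \<noteq> m \<Longrightarrow> f i = (0::real)"
  shows "(\<Sum>i<6*k. f i) = (\<Sum>r<6. f (6*m + r))"
proof -
  have sub: "(\<lambda>r. 6*m + r) ` {..<6} \<subseteq> {..<6*k}" using assms(1) by auto
  have "(\<Sum>i\<in>(\<lambda>r. 6*m + r) ` {..<6}. f i) = (\<Sum>i<6*k. f i)"
  proof (rule sum.mono_neutral_left[OF _ sub])
    show "\<forall>i\<in>{..<6 * k} - (\<lambda>r. 6 * m + r) ` {..<6}. f i = 0"
    proof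
      fix i assume i: "i \<in> {..<6 * k} - (\<lambda>r. 6 * m + r) ` {..<6}"
      have "i div 6 \<noteq> m"
      proof
        assume "i div 6 = m"
        then have "i = 6*m + i mod 6" by presburger
        moreover have "i mod 6 \<in> {..<6}" by simp
        ultimately have "i \<in> (\<lambda>r. 6 * m + r) ` {..<6}" by (rule image_eqI)
        then show False using i by simp
      qed
      then show "f i = 0" using assms(2) by blast
    qed
  qed simp
  then have "(\<Sum>i<6*k. f i) = (\<Sum>i\<in>(\<lambda>r. 6*m + r) ` {..<6}. f i)" by simp
  also have "\<dots> = (\<Sum>r<6. f (6*m + r))" by (subst sum.reindex) (auto simp: inj_on_def)
  finally show ?thesis .
qed


lemma qdec: "q = 6 * ((q::nat) div 6) + q mod 6" by (rule mult_div_mod_eq[symmetric])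
lemma m4: "(q::nat) mod 6 = 4 \<Longrightarrow> q - 4 = 6 * (q div 6) + 0 \<and> q - 3 = 6 * (q div 6) + 1"
  using qdec[of q] by linarith
lemma m5: "(q::nat) mod 6 = 5 \<Longrightarrow> q - 3 = 6 * (q div 6) + 2 \<and> q - 2 = 6 * (q div 6) + 3"
  using qdec[of q] by linarith

lemma mod6_add: "(6 * m + r) mod 6 = (r::nat) mod 6" by simp

definition brH :: "nat \<Rightarrow> vec \<Rightarrow> vec \<Rightarrow> vec" where
  "brH k x y = (\<lambda>q. if q < 6*k then
      (if q mod 6 = 4 then x (q-4) * y (q-3) - x (q-3) * y (q-4)
       else if q mod 6 = 5 then x (q-3) * y (q-2) - x (q-2) * y (q-3) else 0) else 0)"

definition brb :: "(nat \<Rightarrow> real) \<Rightarrow> (nat \<Rightarrow> real) \<Rightarrow> nat \<Rightarrow> real" where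
  "brb x y c = (if c = 4 then x 0 * y 1 - x 1 * y 0 else if c = 5 then x 2 * y 3 - x 3 * y 2 else 0)"

lemma brH_block:
  assumes "q < 6*k"
  shows "brH k x y q = brb (\<lambda>r. x (6*(q div 6) + r)) (\<lambda>r. y (6*(q div 6) + r)) (q mod 6)"
proof (cases "q mod 6 = 4")
  case True
  then show ?thesis using assms m4[of q] by (simp add: brH_def brb_def)
next
  case False
  then show ?thesis using assms m5[of q] by (simp add: brH_def brb_def)
qed

lemma brH_low: "w mod 6 \<noteq> 4 \<Longrightarrow> w mod 6 \<noteq> 5 \<Longrightarrow> brH k y z w = 0"
  by (simp add: brH_def)

lemma brH_J: "brH k u (brH k v w) = vzero"
proof (rule ext)
  fix q :: nat
  show "brH k u (brH k v w) q = vzero q"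
  proof (cases "q mod 6 = 4")
    case True
    then have "(q - 4) mod 6 = 0" "(q - 3) mod 6 = 1" using m4[of q] by (simp_all only: mod6_add) simp_all
    then show ?thesis using True brH_low[of "q-4" k v w] brH_low[of "q-3" k v w] by (simp add: brH_def[of k u])
  next
    case False
    show ?thesis
    proof (cases "q mod 6 = 5")
      case True
      then have "(q - 3) mod 6 = 2" "(q - 2) mod 6 = 3" using m5[of q] by (simp_all only: mod6_add) simp_all
      then show ?thesis using True brH_low[of "q-3" k v w] brH_low[of "q-2" k v w] by (simp add: brH_def[of k u])
    next
      case F2: False
      then show ?thesis using False by (simp add: brH_def[of k u])
    qed
  qed
qed

lemma brH_lie: "is_lie_algebra (6*k) (brH k)"
  unfolding is_lie_algebra_def
proof (intro conjI ballI allI impI)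
  fix x y assume "x \<in> Vsp (6*k)" "y \<in> Vsp (6*k)"
  show "brH k x y \<in> Vsp (6*k)" by (simp add: Vsp_def brH_def)
next
  fix a x y z
  show "brH k (vadd (vscale a x) y) z = vadd (vscale a (brH k x z)) (brH k y z)"
    by (simp add: brH_def fun_eq_iff algebra_simps)
  show "brH k z (vadd (vscale a x) y) = vadd (vscale a (brH k z x)) (brH k z y)"
    by (simp add: brH_def fun_eq_iff algebra_simps)
next
  fix x show "brH k x x = vzero" by (simp add: brH_def fun_eq_iff)
next
  fix x y z
  show "vadd (vadd (brH k x (brH k y z)) (brH k y (brH k z x))) (brH k z (brH k x y)) = vzero"
    by (simp add: brH_J fun_eq_iff)
qed

lemma brH_nil: "nilpotent_lie (6*k) (brH k)"
  unfolding nilpotent_lie_def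
proof (intro exI[of _ 2] allI impI)
  fix ys :: "vec list" and x assume "length ys = 2"
  then obtain u v where ys: "ys = [u, v]"
    by (metis (no_types) One_nat_def length_0_conv length_Suc_conv numeral_2_eq_2)
  show "nested_br (brH k) ys x = vzero" using brH_J by (simp add: ys vzero_def)
qed


definition MB :: "nat \<Rightarrow> nat \<Rightarrow> real" where
  "MB r c = (if (r = 0 \<and> c = 0) \<or> (r = 0 \<and> c = 2) \<or> (r = 1 \<and> c = 1) \<or> (r = 1 \<and> c = 3) \<or>
                (r = 2 \<and> c = 0) \<or> (r = 3 \<and> c = 1) \<or> (r = 4 \<and> c = 4) \<or> (r = 4 \<and> c = 5) \<or> (r = 5 \<and> c = 4) then 1
             else if (r = 2 \<and> c = 2) \<or> (r = 3 \<and> c = 3) \<or> (r = 5 \<and> c = 5) then -1 else 0)"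

definition Mb :: "bool \<Rightarrow> nat \<Rightarrow> nat \<Rightarrow> real" where
  "Mb bt r c = (if bt then MB r c else if r = c then 1 else 0)"
definition Nb :: "bool \<Rightarrow> nat \<Rightarrow> nat \<Rightarrow> real" where
  "Nb bt r c = (if bt then MB r c / 2 else if r = c then 1 else 0)"

definition ss :: "bool \<Rightarrow> nat \<Rightarrow> nat \<Rightarrow> real" where
  "ss bt r r' = (if r = 0 \<and> r' = 1 then 1 else if r = 1 \<and> r' = 0 then -1
     else if r = 2 \<and> r' = 3 then 1 else if r = 3 \<and> r' = 2 then -1
     else if bt \<and> r = 0 \<and> r' = 3 then 1 else if bt \<and> r = 3 \<and> r' = 0 then -1
     else if bt \<and> r = 2 \<and> r' = 1 then 1 else if bt \<and> r = 1 \<and> r' = 2 then -1 else 0)"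
definition tt :: "bool \<Rightarrow> nat \<Rightarrow> nat \<Rightarrow> nat" where
  "tt bt r r' = (if bt then (if (r = 0 \<and> r' = 1) \<or> (r = 1 \<and> r' = 0) \<or> (r = 2 \<and> r' = 3) \<or> (r = 3 \<and> r' = 2) then 4 else 5)
     else (if r \<le> 1 then 4 else 5))"

lemma F1: "c' < 6 \<Longrightarrow> (\<Sum>r<6. (\<Sum>c<6. x c * Nb bt c r) * Mb bt r c') = x c'"
  unfolding sum6 by (cases bt) (auto simp: Mb_def Nb_def MB_def less_Suc_eq numeral_eq_Suc)

lemma F2: "r < 6 \<Longrightarrow> (\<Sum>c<6. (\<Sum>r'<6. y r' * Mb bt r' c) * Nb bt c r) = y r"
  unfolding sum6 apply (cases bt) apply (auto simp: Mb_def Nb_def MB_def less_Suc_eq numeral_eq_Suc)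
  apply (simp_all add: field_simps)
  done

lemma F3: "r < 6 \<Longrightarrow> r' < 6 \<Longrightarrow> c < 6 \<Longrightarrow> brb (Mb bt r) (Mb bt r') c = ss bt r r' * Mb bt (tt bt r r') c"
  by (cases bt) (auto simp: Mb_def MB_def brb_def ss_def tt_def less_Suc_eq numeral_eq_Suc)

lemma F4: "r1 < 6 \<Longrightarrow> r2 < 6 \<Longrightarrow> ss bt r r1 \<noteq> 0 \<Longrightarrow> ss bt r r2 \<noteq> 0 \<Longrightarrow> tt bt r r1 = tt bt r r2 \<Longrightarrow> r1 = r2"
  by (cases bt) (auto simp: ss_def tt_def split: if_splits)

lemma F5: "tt bt r r' < 6" by (simp add: tt_def)
lemma F6: "ss False r r' \<noteq> 0 \<Longrightarrow> ss True r r' \<noteq> 0" by (simp add: ss_def split: if_splits)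
lemma F7: "ss True 0 3 = 1" "ss False 0 3 = 0" by (simp_all add: ss_def)

definition bv :: "nat \<Rightarrow> nat \<Rightarrow> vec" where
  "bv j i = (\<lambda>q. if q div 6 = i div 6 then Mb (i div 6 < j) (i mod 6) (q mod 6) else 0)"

definition cv :: "nat \<Rightarrow> nat \<Rightarrow> vec \<Rightarrow> nat \<Rightarrow> real" where
  "cv k j v = (\<lambda>i. if i < 6*k then (\<Sum>c<6. v (6*(i div 6) + c) * Nb (i div 6 < j) c (i mod 6)) else 0)"

lemma div6: "r < 6 \<Longrightarrow> (6 * m + r) div 6 = (m::nat)" by simp
lemma mod6: "r < 6 \<Longrightarrow> (6 * m + r) mod 6 = (r::nat)" by simp

lemma div_lt6: "i < 6*k \<Longrightarrow> i div 6 < (k::nat)"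
  by (metis less_mult_imp_div_less mult.commute)
lemma div_ge6: "6*k \<le> q \<Longrightarrow> k \<le> (q::nat) div 6"
  using div_le_mono[of "6*k" q 6] by simp

lemma bv_Vsp: assumes "i < 6*k" shows "bv j i \<in> Vsp (6*k)"
  unfolding Vsp_def
proof (intro CollectI allI impI)
  fix q assume "6*k \<le> q"
  then have "i div 6 \<noteq> q div 6" using div_lt6[OF assms] div_ge6[of k q] by linarith
  then show "bv j i q = 0" by (simp add: bv_def)
qed

lemma bv_block: "r < 6 \<Longrightarrow> bv j (6*m + r) q = (if q div 6 = m then Mb (m < j) r (q mod 6) else 0)"
  by (simp add: bv_def div6 mod6)

lemma lin_comb_bv:
  assumes q: "q < 6*k"
  shows "lin_comb (6*k) (bv j) a q = (\<Sum>r<6. a (6*(q div 6) + r) * Mb (q div 6 < j) r (q mod 6))"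
proof -
  have m: "q div 6 < k" using q by (simp add: div_lt6)
  have "lin_comb (6*k) (bv j) a q = (\<Sum>i<6*k. a i * bv j i q)" by (simp add: lin_comb_def)
  also have "\<dots> = (\<Sum>r<6. a (6*(q div 6) + r) * bv j (6*(q div 6) + r) q)"
    by (rule block_sum[OF m]) (auto simp: bv_def)
  also have "\<dots> = (\<Sum>r<6. a (6*(q div 6) + r) * Mb (q div 6 < j) r (q mod 6))"
    by (rule sum.cong) (simp_all add: bv_block)
  finally show ?thesis .
qed

lemma lin_comb_bv_out:
  assumes q: "\<not> q < 6*k" and "\<forall>i\<ge>6*k. a i = 0"
  shows "lin_comb (6*k) (bv j) a q = 0"
proof -
  have "a i * bv j i q = 0" if "i < 6*k" for i
    using bv_Vsp[OF that, of j] q by (simp add: Vsp_def)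
  then show ?thesis unfolding lin_comb_def by (intro sum.neutral) auto
qed

lemma bv_basis: "is_basis (6*k) (bv j)"
  unfolding is_basis_def
proof (intro conjI allI impI ballI)
  fix i assume "i < 6*k" then show "bv j i \<in> Vsp (6*k)" by (rule bv_Vsp)
next
  fix v assume v: "v \<in> Vsp (6*k)"
  have sup: "\<forall>i\<ge>6*k. cv k j v i = 0" by (simp add: cv_def)
  have rep: "v = lin_comb (6*k) (bv j) (cv k j v)"
  proof (rule ext)
    fix q
    show "v q = lin_comb (6*k) (bv j) (cv k j v) q"
    proof (cases "q < 6*k")
      case True
      define m where "m = q div 6"
      have mk: "m < k" using True by (simp add: m_def div_lt6)
      have qm: "q = 6*m + q mod 6" unfolding m_def by (rule qdec)
      have cvr: "cv k j v (6*m + r) = (\<Sum>c<6. v (6*m + c) * Nb (m < j) c r)" if "r < 6" for r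
      proof -
        have "6*m + r < 6*k" using mk that by linarith
        then show ?thesis using that by (simp add: cv_def div6 mod6)
      qed
      have "lin_comb (6*k) (bv j) (cv k j v) q = (\<Sum>r<6. cv k j v (6*m + r) * Mb (m < j) r (q mod 6))"
        using lin_comb_bv[OF True] by (simp add: m_def)
      also have "\<dots> = (\<Sum>r<6. (\<Sum>c<6. v (6*m + c) * Nb (m < j) c r) * Mb (m < j) r (q mod 6))"
        by (rule sum.cong) (simp_all add: cvr)
      also have "\<dots> = v (6*m + q mod 6)" by (rule F1) simp
      finally show ?thesis using qm by simp
    next
      case False
      then show ?thesis using v sup lin_comb_bv_out[OF False sup] by (simp add: Vsp_def)
    qed
  qed
  show "\<exists>!a. (\<forall>i\<ge>6*k. a i = 0) \<and> v = lin_comb (6*k) (bv j) a"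
  proof (rule ex1I[of _ "cv k j v"])
    show "(\<forall>i\<ge>6*k. cv k j v i = 0) \<and> v = lin_comb (6*k) (bv j) (cv k j v)" using sup rep by blast
  next
    fix a assume a: "(\<forall>i\<ge>6*k. a i = 0) \<and> v = lin_comb (6*k) (bv j) a"
    show "a = cv k j v"
    proof (rule ext)
      fix i
      show "a i = cv k j v i"
      proof (cases "i < 6*k")
        case True
        define m where "m = i div 6"
        have mk: "m < k" using True by (simp add: m_def div_lt6)
        have im: "i = 6*m + i mod 6" unfolding m_def by (rule qdec)
        have vc: "v (6*m + c) = (\<Sum>r'<6. a (6*m + r') * Mb (m < j) r' c)" if "c < 6" for c
        proof -
          have "6*m + c < 6*k" using mk that by linarith
          then show ?thesis using a lin_comb_bv[of "6*m+c" k j a] that by (simp add: div6 mod6)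
        qed
        have "cv k j v i = (\<Sum>c<6. v (6*m + c) * Nb (m < j) c (i mod 6))"
          using True by (simp add: cv_def m_def)
        also have "\<dots> = (\<Sum>c<6. (\<Sum>r'<6. a (6*m + r') * Mb (m < j) r' c) * Nb (m < j) c (i mod 6))"
          by (rule sum.cong) (simp_all add: vc)
        also have "\<dots> = a (6*m + i mod 6)" by (rule F2) simp
        finally show ?thesis using im by simp
      next
        case False
        then show ?thesis using a by (simp add: cv_def)
      qed
    qed
  qed
qed


definition sI :: "nat \<Rightarrow> nat \<Rightarrow> nat \<Rightarrow> real" where
  "sI j i l = (if i div 6 = l div 6 then ss (i div 6 < j) (i mod 6) (l mod 6) else 0)"
definition tI :: "nat \<Rightarrow> nat \<Rightarrow> nat \<Rightarrow> nat" where
  "tI j i l = 6*(i div 6) + tt (i div 6 < j) (i mod 6) (l mod 6)"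

lemma brb_cong: "(\<And>r. r < 4 \<Longrightarrow> x r = x' r) \<Longrightarrow> (\<And>r. r < 4 \<Longrightarrow> y r = y' r) \<Longrightarrow> brb x y c = brb x' y' c"
  by (simp add: brb_def)

lemma brb_zero_l: "(\<And>r. r < 4 \<Longrightarrow> x r = 0) \<Longrightarrow> brb x y c = 0"
  by (simp add: brb_def)
lemma brb_zero_r: "(\<And>r. r < 4 \<Longrightarrow> y r = 0) \<Longrightarrow> brb x y c = 0"
  by (simp add: brb_def)

lemma bv_at: "r < 6 \<Longrightarrow> bv j i (6*m + r) = (if i div 6 = m then Mb (m < j) (i mod 6) r else 0)"
  by (auto simp: bv_def div6 mod6)

lemma tI_lt: "i < 6*k \<Longrightarrow> tI j i l < 6*k"
proof -
  assume i: "i < 6*k"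
  have "i div 6 < k" using div_lt6[OF i] .
  moreover have "tt (i div 6 < j) (i mod 6) (l mod 6) < 6" by (rule F5)
  ultimately show ?thesis unfolding tI_def by linarith
qed

lemma bv_table:
  assumes i: "i < 6*k" and l: "l < 6*k"
  shows "tI j i l < 6*k \<and> brH k (bv j i) (bv j l) = vscale (sI j i l) (bv j (tI j i l))"
proof
  show tl: "tI j i l < 6*k" by (rule tI_lt[OF i])
  show "brH k (bv j i) (bv j l) = vscale (sI j i l) (bv j (tI j i l))"
  proof (rule ext)
    fix q
    show "brH k (bv j i) (bv j l) q = vscale (sI j i l) (bv j (tI j i l)) q"
    proof (cases "q < 6*k")
      case False
      then have "bv j (tI j i l) q = 0" using bv_Vsp[OF tl, of j] by (simp add: Vsp_def)
      then show ?thesis using False by (simp add: brH_def)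
    next
      case True
      define m where "m = q div 6"
      have qm: "q = 6*m + q mod 6" unfolding m_def by (rule qdec)
      have q6: "q mod 6 < 6" by simp
      have LHS: "brH k (bv j i) (bv j l) q = brb (\<lambda>r. bv j i (6*m + r)) (\<lambda>r. bv j l (6*m + r)) (q mod 6)"
        using brH_block[OF True] by (simp add: m_def)
      have tdiv: "tI j i l div 6 = i div 6" and tmod: "tI j i l mod 6 = tt (i div 6 < j) (i mod 6) (l mod 6)"
        unfolding tI_def using F5 by (simp_all add: div6 mod6)
      have bvt: "bv j (tI j i l) q = (if i div 6 = m then Mb (m < j) (tt (i div 6 < j) (i mod 6) (l mod 6)) (q mod 6) else 0)"
        using tdiv tmod by (simp add: bv_def m_def)
      show ?thesis
      proof (cases "i div 6 = m")
        case False
        have "brb (\<lambda>r. bv j i (6*m + r)) (\<lambda>r. bv j l (6*m + r)) (q mod 6) = 0"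
          by (rule brb_zero_l) (simp add: bv_at False)
        then show ?thesis using LHS bvt False by simp
      next
        case im: True
        show ?thesis
        proof (cases "l div 6 = m")
          case False
          have "brb (\<lambda>r. bv j i (6*m + r)) (\<lambda>r. bv j l (6*m + r)) (q mod 6) = 0"
            by (rule brb_zero_r) (simp add: bv_at False)
          moreover have "sI j i l = 0" using im False by (simp add: sI_def)
          ultimately show ?thesis using LHS by simp
        next
          case lm: True
          have "brb (\<lambda>r. bv j i (6*m + r)) (\<lambda>r. bv j l (6*m + r)) (q mod 6)
              = brb (Mb (m < j) (i mod 6)) (Mb (m < j) (l mod 6)) (q mod 6)"
            by (rule brb_cong) (simp_all add: bv_at im lm)
          also have "\<dots> = ss (m < j) (i mod 6) (l mod 6) * Mb (m < j) (tt (m < j) (i mod 6) (l mod 6)) (q mod 6)"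
            by (rule F3) simp_all
          finally show ?thesis using LHS bvt im lm by (simp add: sI_def)
        qed
      qed
    qed
  qed
qed

lemma bv_nice: "nice_basis (6*k) (brH k) (bv j)"
proof (rule nice_from_table[OF brH_lie bv_basis])
  fix i l assume "i < 6*k" "l < 6*k"
  then show "tI j i l < 6*k \<and> brH k (bv j i) (bv j l) = vscale (sI j i l) (bv j (tI j i l))"
    by (rule bv_table)
next
  fix i l l' assume i: "i < 6*k" and "l < 6*k" "l' < 6*k" and s1: "sI j i l \<noteq> 0" and s2: "sI j i l' \<noteq> 0"
    and t: "tI j i l = tI j i l'"
  have d1: "l div 6 = i div 6" using s1 by (simp add: sI_def split: if_splits)
  have d2: "l' div 6 = i div 6" using s2 by (simp add: sI_def split: if_splits)
  have "l mod 6 = l' mod 6"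
  proof (rule F4)
    show "ss (i div 6 < j) (i mod 6) (l mod 6) \<noteq> 0" using s1 d1 by (simp add: sI_def)
    show "ss (i div 6 < j) (i mod 6) (l' mod 6) \<noteq> 0" using s2 d2 by (simp add: sI_def)
    show "tt (i div 6 < j) (i mod 6) (l mod 6) = tt (i div 6 < j) (i mod 6) (l' mod 6)" using t by (simp add: tI_def)
  qed simp_all
  then show "l = l'" using d1 d2 qdec[of l] qdec[of l'] by metis
qed

lemma bv_pairs: "{(i,l). i < 6*k \<and> l < 6*k \<and> brH k (bv j i) (bv j l) \<noteq> vzero}
   = {(i,l). i < 6*k \<and> l < 6*k \<and> sI j i l \<noteq> 0}"
proof -
  have "brH k (bv j i) (bv j l) \<noteq> vzero \<longleftrightarrow> sI j i l \<noteq> 0" if "i < 6*k" "l < 6*k" for i l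
  proof -
    have t: "tI j i l < 6*k" and e: "brH k (bv j i) (bv j l) = vscale (sI j i l) (bv j (tI j i l))"
      using bv_table[OF that] by auto
    have nz: "bv j (tI j i l) \<noteq> vzero" by (rule basis_nonzero[OF bv_basis t])
    show ?thesis
    proof
      assume "brH k (bv j i) (bv j l) \<noteq> vzero" then show "sI j i l \<noteq> 0" using e by (auto simp: fun_eq_iff)
    next
      assume "sI j i l \<noteq> 0" then show "brH k (bv j i) (bv j l) \<noteq> vzero" using e nz vscale_eq_zero by simp
    qed
  qed
  then show ?thesis by auto
qed

lemma npairs_strict:
  assumes "j < j'" "j' \<le> k"
  shows "npairs (6*k) (brH k) (bv j) < npairs (6*k) (brH k) (bv j')"
proof -
  let ?P = "\<lambda>j. {(i,l). i < 6*k \<and> l < 6*k \<and> sI j i l \<noteq> 0}"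
  have sub: "?P j \<subseteq> ?P j'"
  proof
    fix p assume "p \<in> ?P j"
    then obtain i l where p: "p = (i,l)" "i < 6*k" "l < 6*k" "sI j i l \<noteq> 0" by auto
    have "sI j' i l \<noteq> 0"
    proof (cases "i div 6 < j")
      case True then show ?thesis using p assms by (simp add: sI_def split: if_splits)
    next
      case False
      then have "ss False (i mod 6) (l mod 6) \<noteq> 0" "i div 6 = l div 6" using p by (simp_all add: sI_def split: if_splits)
      then show ?thesis using F6 by (cases "i div 6 < j'") (simp_all add: sI_def)
    qed
    then show "p \<in> ?P j'" using p by simp
  qed
  have jk: "6*j + 3 < 6*k" using assms by linarith
  have d: "(6*j + 3) div 6 = j" "(6*j) div 6 = j" "(6*j+3) mod 6 = 3" "(6*j) mod 6 = 0" by simp_all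
  have in1: "(6*j, 6*j+3) \<in> ?P j'" using jk assms F7 by (simp add: sI_def d)
  have in2: "(6*j, 6*j+3) \<notin> ?P j" using F7 by (simp add: sI_def d)
  have "?P j \<subset> ?P j'" using sub in1 in2 by blast
  moreover have "finite (?P j')"
    by (rule finite_subset[of _ "{..<6*k} \<times> {..<6*k}"]) auto
  ultimately have "card (?P j) < card (?P j')" by (rule psubset_card_mono[rotated])
  then show ?thesis by (simp add: npairs_def bv_pairs)
qed

lemma npairs_inj:
  assumes "j \<le> k" "j' \<le> k" "j \<noteq> j'"
  shows "npairs (6*k) (brH k) (bv j) \<noteq> npairs (6*k) (brH k) (bv j')"
  using npairs_strict[of j j' k] npairs_strict[of j' j k] assms by (cases "j < j'") auto

lemma lower_6k: "enat (k + 1) \<le> max_nice (6*k)"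
proof -
  define S where "S = bv ` {..k}"
  have inj: "inj_on bv {..k}"
  proof (rule inj_onI)
    fix j j' assume "j \<in> {..k}" "j' \<in> {..k}" "bv j = bv j'"
    then show "j = j'" using npairs_inj[of j k j'] by auto
  qed
  have card: "card S = k + 1" using card_image[OF inj] by (simp add: S_def)
  have mem: "enat (card S) \<in> {enat (card S) | S br.
      is_lie_algebra (6*k) br \<and> nilpotent_lie (6*k) br \<and> finite S \<and>
      (\<forall>b\<in>S. nice_basis (6*k) br b) \<and>
      (\<forall>b1\<in>S. \<forall>b2\<in>S. b1 \<noteq> b2 \<longrightarrow> \<not> equiv_nice (6*k) br b1 br b2)}"
  proof (intro CollectI exI conjI)
    show "enat (card S) = enat (card S)" ..
    show "is_lie_algebra (6*k) (brH k)" by (rule brH_lie)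
    show "nilpotent_lie (6*k) (brH k)" by (rule brH_nil)
    show "finite S" by (simp add: S_def)
    show "\<forall>b\<in>S. nice_basis (6*k) (brH k) b" using bv_nice by (auto simp: S_def)
    show "\<forall>b1\<in>S. \<forall>b2\<in>S. b1 \<noteq> b2 \<longrightarrow> \<not> equiv_nice (6*k) (brH k) b1 (brH k) b2"
    proof (intro ballI impI)
      fix b1 b2 assume "b1 \<in> S" "b2 \<in> S" "b1 \<noteq> b2"
      then obtain j j' where jj: "j \<le> k" "j' \<le> k" "b1 = bv j" "b2 = bv j'" "j \<noteq> j'" by (auto simp: S_def)
      show "\<not> equiv_nice (6*k) (brH k) b1 (brH k) b2"
      proof
        assume "equiv_nice (6*k) (brH k) b1 (brH k) b2"
        then have "npairs (6*k) (brH k) b1 = npairs (6*k) (brH k) b2"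
          using equiv_npairs[OF brH_lie bv_basis bv_basis] jj by simp
        then show False using npairs_inj[OF jj(1,2,5)] jj by simp
      qed
    qed
  qed
  show ?thesis unfolding max_nice_def using Sup_upper[OF mem] card by simp
qed


lemma coord_eq_imp_eq:
  assumes B: "is_basis n b" and x: "x \<in> Vsp n" and y: "y \<in> Vsp n"
    and e: "\<And>i. i < n \<Longrightarrow> coord n b i x = coord n b i y"
  shows "x = y"
proof -
  have "x = lin_comb n b (\<lambda>i. coord n b i x)" using basis_coord[OF B x] by simp
  also have "\<dots> = lin_comb n b (\<lambda>i. coord n b i y)" by (rule lin_comb_cong) (simp add: e)
  also have "\<dots> = y" using basis_coord[OF B y] by simp
  finally show ?thesis .
qed

lemma perm_bij:
  assumes V: "vlin n \<psi>" and B1: "is_basis n b1" and B2: "is_basis n b2"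
    and P: "\<And>i. i < n \<Longrightarrow> \<psi> (b1 i) = vscale (d i) (b2 (\<pi> i))"
    and D: "\<And>i. i < n \<Longrightarrow> d i \<noteq> 0"
    and I: "inj_on \<pi> {..<n}" and S: "\<pi> ` {..<n} = {..<n}"
  shows "bij_betw \<psi> (Vsp n) (Vsp n)"
proof -
  have pin: "\<pi> i < n" if "i < n" for i using S that by auto
  have img: "\<psi> x \<in> Vsp n" if x: "x \<in> Vsp n" for x
  proof -
    have "\<psi> x = \<psi> (lin_comb n b1 (\<lambda>i. coord n b1 i x))" using basis_coord[OF B1 x] by simp
    also have "\<dots> = lin_comb n (\<lambda>i. \<psi> (b1 i)) (\<lambda>i. coord n b1 i x)"
      by (rule vlin_lin_comb[OF V order_refl basis_Vsp[OF B1]])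
    finally show ?thesis using P pin basis_Vsp[OF B2]
      by (metis (no_types, lifting) lin_comb_Vsp vscale_Vsp)
  qed
  have key: "coord n b2 (\<pi> i0) (\<psi> x) = coord n b1 i0 x * d i0" if x: "x \<in> Vsp n" and i0: "i0 < n" for x i0
  proof -
    have g: "flin n (\<lambda>y. coord n b2 (\<pi> i0) (\<psi> y))"
      unfolding flin_def
    proof (intro allI impI)
      fix c y z assume "y \<in> Vsp n" "z \<in> Vsp n"
      then show "coord n b2 (\<pi> i0) (\<psi> (vadd (vscale c y) z)) = c * coord n b2 (\<pi> i0) (\<psi> y) + coord n b2 (\<pi> i0) (\<psi> z)"
        using V img coord_flin[OF B2, of "\<pi> i0"] unfolding vlin_def flin_def by simp
    qed
    have "coord n b2 (\<pi> i0) (\<psi> x) = coord n b2 (\<pi> i0) (\<psi> (lin_comb n b1 (\<lambda>i. coord n b1 i x)))"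
      using basis_coord[OF B1 x] by simp
    also have "\<dots> = (\<Sum>i<n. coord n b1 i x * coord n b2 (\<pi> i0) (\<psi> (b1 i)))"
      by (rule flin_lin_comb[OF g order_refl basis_Vsp[OF B1]])
    also have "\<dots> = (\<Sum>i<n. if i = i0 then coord n b1 i0 x * d i0 else 0)"
    proof (rule sum.cong)
      fix i assume i: "i \<in> {..<n}"
      have "coord n b2 (\<pi> i0) (\<psi> (b1 i)) = d i * coord n b2 (\<pi> i0) (b2 (\<pi> i))"
        using P[of i] i flin_scale[OF coord_flin[OF B2] basis_Vsp[OF B2 pin]] by simp
      also have "\<dots> = (if i = i0 then d i else 0)"
        using coord_basis[OF B2 pin[of i]] i i0 I by (auto simp: inj_on_def)
      finally show "coord n b1 i x * coord n b2 (\<pi> i0) (\<psi> (b1 i)) = (if i = i0 then coord n b1 i0 x * d i0 else 0)"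
        by simp
    qed simp
    also have "\<dots> = coord n b1 i0 x * d i0" using i0 by (simp add: sum.delta)
    finally show ?thesis .
  qed
  have inj: "inj_on \<psi> (Vsp n)"
  proof (rule inj_onI)
    fix x y assume x: "x \<in> Vsp n" and y: "y \<in> Vsp n" and e: "\<psi> x = \<psi> y"
    show "x = y"
    proof (rule coord_eq_imp_eq[OF B1 x y])
      fix i assume i: "i < n"
      have "coord n b1 i x * d i = coord n b1 i y * d i" using key[OF x i] key[OF y i] e by metis
      then show "coord n b1 i x = coord n b1 i y" using D[OF i] by simp
    qed
  qed
  have surj: "Vsp n \<subseteq> \<psi> ` Vsp n"
  proof
    fix v assume v: "v \<in> Vsp n"
    define a where "a i = (if i < n then coord n b2 (\<pi> i) v / d i else 0)" for i
    define x where "x = lin_comb n b1 a"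
    have x: "x \<in> Vsp n" unfolding x_def by (rule lin_comb_Vsp) (rule basis_Vsp[OF B1])
    have cx: "coord n b1 i x = a i" for i by (rule coord_unique[OF B1]) (simp add: a_def, simp add: x_def)
    have "\<psi> x = v"
    proof (rule coord_eq_imp_eq[OF B2 img[OF x] v])
      fix k assume k: "k < n"
      then obtain i where i: "i < n" "\<pi> i = k" using S by (metis imageE lessThan_iff)
      have "coord n b2 k (\<psi> x) = a i * d i" using key[OF x i(1)] i cx by simp
      also have "\<dots> = coord n b2 k v" using i D[OF i(1)] by (simp add: a_def)
      finally show "coord n b2 k (\<psi> x) = coord n b2 k v" .
    qed
    then show "v \<in> \<psi> ` Vsp n" using x by blast
  qed
  show ?thesis unfolding bij_betw_def using inj surj img by auto
qed


definition tr :: "nat \<Rightarrow> vec \<Rightarrow> vec" where "tr n x = (\<lambda>q. if q < n then x q else 0)"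
definition brE :: "nat \<Rightarrow> (vec \<Rightarrow> vec \<Rightarrow> vec) \<Rightarrow> vec \<Rightarrow> vec \<Rightarrow> vec" where
  "brE n br x y = br (tr n x) (tr n y)"
definition en :: "nat \<Rightarrow> vec" where "en n = (\<lambda>q. if q = n then 1 else 0)"
definition extb :: "nat \<Rightarrow> (nat \<Rightarrow> vec) \<Rightarrow> nat \<Rightarrow> vec" where
  "extb n b = (\<lambda>i. if i < n then b i else en n)"

lemma tr_Vsp[simp]: "tr n x \<in> Vsp n" by (simp add: tr_def Vsp_def)
lemma tr_id: "x \<in> Vsp n \<Longrightarrow> tr n x = x" by (auto simp: tr_def Vsp_def fun_eq_iff)
lemma tr_lin: "tr n (vadd (vscale a x) y) = vadd (vscale a (tr n x)) (tr n y)"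
  by (simp add: tr_def fun_eq_iff)
lemma tr_en: "tr n (en n) = vzero" by (simp add: tr_def en_def fun_eq_iff)
lemma tr_scale: "tr n (vscale a x) = vscale a (tr n x)" by (simp add: tr_def fun_eq_iff)
lemma Vsp_Suc: "x \<in> Vsp n \<Longrightarrow> x \<in> Vsp (Suc n)" by (rule Vsp_mono) auto
lemma Vsp_at: "x \<in> Vsp n \<Longrightarrow> x n = 0" by (simp add: Vsp_def)

context fixes n br assumes L: "is_lie_algebra n br"
begin

lemma brE_lie: "is_lie_algebra (Suc n) (brE n br)"
  unfolding is_lie_algebra_def
proof (intro conjI ballI allI impI)
  fix x y assume "x \<in> Vsp (Suc n)" "y \<in> Vsp (Suc n)"
  show "brE n br x y \<in> Vsp (Suc n)" unfolding brE_def by (rule Vsp_Suc[OF br_Vsp[OF L]]) simp_all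
next
  fix a x y z
  show "brE n br (vadd (vscale a x) y) z = vadd (vscale a (brE n br x z)) (brE n br y z)"
    using br_vlin_l[OF L tr_Vsp[of n z]] unfolding brE_def tr_lin vlin_def by simp
  show "brE n br z (vadd (vscale a x) y) = vadd (vscale a (brE n br z x)) (brE n br z y)"
    using br_vlin_r[OF L tr_Vsp[of n z]] unfolding brE_def tr_lin vlin_def by simp
next
  fix x show "brE n br x x = vzero" unfolding brE_def by (rule br_alt[OF L]) simp
next
  fix x y z
  have e: "brE n br u (brE n br v w) = br (tr n u) (br (tr n v) (tr n w))" for u v w
    unfolding brE_def using tr_id[OF br_Vsp[OF L tr_Vsp tr_Vsp]] by simp
  show "vadd (vadd (brE n br x (brE n br y z)) (brE n br y (brE n br z x))) (brE n br z (brE n br x y)) = vzero"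
  proof -
    have J: "\<forall>x\<in>Vsp n. \<forall>y\<in>Vsp n. \<forall>z\<in>Vsp n.
        vadd (vadd (br x (br y z)) (br y (br z x))) (br z (br x y)) = vzero"
      using L unfolding is_lie_algebra_def by blast
    show ?thesis unfolding e by (rule J[rule_format]) simp_all
  qed
qed

lemma tr_nested: "tr n (nested_br (brE n br) ys x) = nested_br br (map (tr n) ys) (tr n x)"
proof (induction ys)
  case Nil then show ?case by simp
next
  case (Cons y ys)
  have "tr n (nested_br (brE n br) (y # ys) x) = tr n (br (tr n y) (tr n (nested_br (brE n br) ys x)))"
    by (simp add: brE_def)
  also have "\<dots> = br (tr n y) (tr n (nested_br (brE n br) ys x))"
    by (rule tr_id[OF br_Vsp[OF L tr_Vsp tr_Vsp]])
  finally show ?case using Cons by simp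
qed

lemma brE_nil: assumes N: "nilpotent_lie n br" shows "nilpotent_lie (Suc n) (brE n br)"
proof -
  obtain k where k: "\<forall>ys x. length ys = k \<longrightarrow> set ys \<subseteq> Vsp n \<longrightarrow> x \<in> Vsp n \<longrightarrow> nested_br br ys x = vzero"
    using N unfolding nilpotent_lie_def by blast
  show ?thesis unfolding nilpotent_lie_def
  proof (intro exI[of _ "Suc k"] allI impI)
    fix ys :: "vec list" and x :: vec assume len: "length ys = Suc k"
    then obtain y ys' where ys: "ys = y # ys'" "length ys' = k" by (cases ys) auto
    have "nested_br (brE n br) ys x = br (tr n y) (tr n (nested_br (brE n br) ys' x))"
      by (simp add: ys brE_def)
    also have "\<dots> = br (tr n y) (nested_br br (map (tr n) ys') (tr n x))" by (simp add: tr_nested)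
    also have "nested_br br (map (tr n) ys') (tr n x) = vzero" using k ys by (intro k[rule_format]) auto
    also have "br (tr n y) vzero = vzero" by (rule br_zero_r[OF L]) simp
    finally show "nested_br (brE n br) ys x = vzero" .
  qed
qed

end


lemma lin_comb_cong_b: "(\<And>i. i < m \<Longrightarrow> b i = b' i) \<Longrightarrow> lin_comb m b a = lin_comb m b' a"
  unfolding lin_comb_def by (rule ext, rule sum.cong) auto

lemma recon: assumes v: "v \<in> Vsp (Suc n)" shows "vadd (tr n v) (vscale (v n) (en n)) = v"
proof (rule ext)
  fix q show "vadd (tr n v) (vscale (v n) (en n)) q = v q"
  proof (cases "q < n")
    case True then show ?thesis by (simp add: tr_def en_def)
  next
    case False
    show ?thesis
    proof (cases "q = n")
      case True then show ?thesis by (simp add: tr_def en_def)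
    next
      case F2: False
      then have "v q = 0" using v False by (simp add: Vsp_def)
      then show ?thesis using False F2 by (simp add: tr_def en_def)
    qed
  qed
qed

lemma lin_comb_extb: "lin_comb (Suc n) (extb n b) a = vadd (lin_comb n b a) (vscale (a n) (en n))"
proof -
  have "lin_comb n (extb n b) a = lin_comb n b a" by (rule lin_comb_cong_b) (simp add: extb_def)
  then show ?thesis unfolding lin_comb_Suc by (simp add: extb_def)
qed

context fixes n b assumes B: "is_basis n b"
begin

lemma extb_basis: "is_basis (Suc n) (extb n b)"
  unfolding is_basis_def
proof (intro conjI allI impI ballI)
  fix i assume "i < Suc n"
  show "extb n b i \<in> Vsp (Suc n)"
  proof (cases "i < n")
    case True then show ?thesis using Vsp_Suc[OF basis_Vsp[OF B True]] by (simp add: extb_def)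
  next
    case False then show ?thesis by (simp add: extb_def en_def Vsp_def)
  qed
next
  fix v assume v: "v \<in> Vsp (Suc n)"
  define a where "a i = (if i < n then coord n b i (tr n v) else if i = n then v n else 0)" for i
  have rep: "v = lin_comb (Suc n) (extb n b) a"
  proof -
    have "lin_comb n b a = lin_comb n b (\<lambda>i. coord n b i (tr n v))" by (rule lin_comb_cong) (simp add: a_def)
    also have "\<dots> = tr n v" using basis_coord[OF B tr_Vsp] by simp
    finally have "lin_comb (Suc n) (extb n b) a = vadd (tr n v) (vscale (v n) (en n))"
      by (simp add: lin_comb_extb a_def)
    also have "\<dots> = v" by (rule recon[OF v])
    finally show ?thesis by simp
  qed
  show "\<exists>!a. (\<forall>i\<ge>Suc n. a i = 0) \<and> v = lin_comb (Suc n) (extb n b) a"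
  proof (rule ex1I[of _ a])
    show "(\<forall>i\<ge>Suc n. a i = 0) \<and> v = lin_comb (Suc n) (extb n b) a" using rep by (simp add: a_def)
  next
    fix a' assume a': "(\<forall>i\<ge>Suc n. a' i = 0) \<and> v = lin_comb (Suc n) (extb n b) a'"
    have vv: "v = vadd (lin_comb n b a') (vscale (a' n) (en n))" using a' lin_comb_extb by simp
    have lcV: "lin_comb n b a' \<in> Vsp n" by (rule lin_comb_Vsp) (rule basis_Vsp[OF B])
    have an: "a' n = v n" using vv Vsp_at[OF lcV] by (simp add: en_def)
    have trv: "tr n v = lin_comb n b (a'(n := 0))"
    proof -
      have "tr n v = lin_comb n b a'"
      proof (rule ext)
        fix q
        have vq: "v q = lin_comb n b a' q + a' n * en n q" using vv by (metis vadd_apply vscale_apply)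
        show "tr n v q = lin_comb n b a' q"
        proof (cases "q < n")
          case True then show ?thesis using vq by (simp add: tr_def en_def)
        next
          case False then show ?thesis using lcV by (simp add: tr_def Vsp_def)
        qed
      qed
      also have "\<dots> = lin_comb n b (a'(n := 0))" by (rule lin_comb_cong) simp
      finally show ?thesis .
    qed
    show "a' = a"
    proof (rule ext)
      fix i
      show "a' i = a i"
      proof (cases "i < n")
        case True
        have sup0: "\<forall>i\<ge>n. (a'(n := 0)) i = 0"
        proof (intro allI impI)
          fix i assume ni: "n \<le> i"
          show "(a'(n := 0)) i = 0"
          proof (cases "i = n")
            case True then show ?thesis by simp
          next
            case False
            then have "Suc n \<le> i" using ni by simp
            then show ?thesis using a' False by simp
          qed
        qed
        have "coord n b i (tr n v) = (a'(n := 0)) i"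
          by (rule coord_unique[OF B sup0 trv])
        then show ?thesis using True by (simp add: a_def)
      next
        case False
        show ?thesis
        proof (cases "i = n")
          case True then show ?thesis using an by (simp add: a_def)
        next
          case F2: False
          then have "i \<ge> Suc n" using False by simp
          then show ?thesis using a' False F2 by (simp add: a_def)
        qed
      qed
    qed
  qed
qed

lemma coord_extb:
  assumes v: "v \<in> Vsp (Suc n)"
  shows "coord (Suc n) (extb n b) j v = (if j < n then coord n b j (tr n v) else if j = n then v n else 0)"
proof -
  define a where "a i = (if i < n then coord n b i (tr n v) else if i = n then v n else 0)" for i
  have "lin_comb n b a = lin_comb n b (\<lambda>i. coord n b i (tr n v))" by (rule lin_comb_cong) (simp add: a_def)
  also have "\<dots> = tr n v" using basis_coord[OF B tr_Vsp] by simp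
  finally have "lin_comb (Suc n) (extb n b) a = vadd (tr n v) (vscale (v n) (en n))"
    by (simp add: lin_comb_extb a_def)
  also have "\<dots> = v" by (rule recon[OF v])
  finally have eq: "v = lin_comb (Suc n) (extb n b) a" by simp
  have "coord (Suc n) (extb n b) j v = a j"
    by (rule coord_unique[OF extb_basis _ eq]) (simp add: a_def)
  then show ?thesis by (simp add: a_def)
qed

end


lemma nice_ext:
  assumes L: "is_lie_algebra n br" and N: "nice_basis n br b"
  shows "nice_basis (Suc n) (brE n br) (extb n b)"
proof -
  have B: "is_basis n b" using N by (simp add: nice_basis_def)
  have N1: "\<forall>i<n. \<forall>j<n. \<exists>k<n. \<exists>c. br (b i) (b j) = vscale c (b k)" using N by (simp add: nice_basis_def)
  have N2: "\<forall>i<n. \<forall>j<n. \<exists>k<n. \<exists>c. \<forall>x\<in>Vsp n. - coord n b j (br (b i) x) = c * coord n b k x"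
    using N by (simp add: nice_basis_def)
  have trb: "tr n (extb n b i) = (if i < n then b i else vzero)" for i
    using tr_id[OF basis_Vsp[OF B]] tr_en by (simp add: extb_def)
  have brEb: "brE n br (extb n b i) x = (if i < n then br (b i) (tr n x) else vzero)" for i x
  proof (cases "i < n")
    case True then show ?thesis by (simp add: brE_def trb)
  next
    case False
    then have "brE n br (extb n b i) x = br vzero (tr n x)" by (simp add: brE_def trb)
    then show ?thesis using br_zero_l[OF L tr_Vsp] False by simp
  qed
  show ?thesis
    unfolding nice_basis_def
  proof (intro conjI allI impI extb_basis[OF B])
    fix i j assume i: "i < Suc n" and j: "j < Suc n"
    show "\<exists>k<Suc n. \<exists>c. brE n br (extb n b i) (extb n b j) = vscale c (extb n b k)"
    proof (cases "i < n \<and> j < n")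
      case True
      then obtain k c where k: "k < n" "br (b i) (b j) = vscale c (b k)" using N1 by blast
      have ti: "tr n (b i) = b i" "tr n (b j) = b j" using True tr_id[OF basis_Vsp[OF B]] by auto
      have e1: "brE n br (extb n b i) (extb n b j) = br (b i) (b j)" using True by (simp add: brE_def extb_def ti)
      have e2: "extb n b k = b k" using k by (simp add: extb_def)
      have "brE n br (extb n b i) (extb n b j) = vscale c (extb n b k)"
        using e1 e2 k(2) by simp
      then show ?thesis using k by (intro exI[of _ k]) auto
    next
      case False
      have "brE n br (extb n b i) (extb n b j) = vzero"
        using False br_zero_l[OF L] br_zero_r[OF L] trb basis_Vsp[OF B] by (auto simp: brE_def)
      also have "\<dots> = vscale 0 (extb n b 0)" by (simp add: fun_eq_iff)
      finally show ?thesis by blast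
    qed
  next
    fix i j assume i: "i < Suc n" and j: "j < Suc n"
    have w: "brE n br (extb n b i) x \<in> Vsp n" for x
      using brEb br_Vsp[OF L basis_Vsp[OF B] tr_Vsp] by simp
    have ce: "coord (Suc n) (extb n b) j (brE n br (extb n b i) x) =
        (if j < n then coord n b j (brE n br (extb n b i) x) else 0)" for x
      using coord_extb[OF B Vsp_Suc[OF w]] tr_id[OF w] Vsp_at[OF w] by simp
    show "\<exists>k<Suc n. \<exists>c. \<forall>x\<in>Vsp (Suc n). - coord (Suc n) (extb n b) j (brE n br (extb n b i) x) = c * coord (Suc n) (extb n b) k x"
    proof (cases "i < n \<and> j < n")
      case True
      then obtain k c where k: "k < n" "\<forall>x\<in>Vsp n. - coord n b j (br (b i) x) = c * coord n b k x" using N2 by blast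
      have "\<forall>x\<in>Vsp (Suc n). - coord (Suc n) (extb n b) j (brE n br (extb n b i) x) = c * coord (Suc n) (extb n b) k x"
      proof
        fix x assume x: "x \<in> Vsp (Suc n)"
        have "- coord (Suc n) (extb n b) j (brE n br (extb n b i) x) = - coord n b j (br (b i) (tr n x))"
          using ce True brEb by simp
        also have "\<dots> = c * coord n b k (tr n x)" using k by simp
        also have "\<dots> = c * coord (Suc n) (extb n b) k x" using coord_extb[OF B x] k by simp
        finally show "- coord (Suc n) (extb n b) j (brE n br (extb n b i) x) = c * coord (Suc n) (extb n b) k x" .
      qed
      then show ?thesis using k by (intro exI[of _ k]) auto
    next
      case False
      have "\<forall>x\<in>Vsp (Suc n). - coord (Suc n) (extb n b) j (brE n br (extb n b i) x) = 0 * coord (Suc n) (extb n b) 0 x"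
      proof
        fix x assume x: "x \<in> Vsp (Suc n)"
        show "- coord (Suc n) (extb n b) j (brE n br (extb n b i) x) = 0 * coord (Suc n) (extb n b) 0 x"
        proof (cases "j < n")
          case True
          then have "\<not> i < n" using False by simp
          then have z: "brE n br (extb n b i) x = vzero" using brEb by simp
          have "coord (Suc n) (extb n b) j (brE n br (extb n b i) x) = coord n b j (brE n br (extb n b i) x)"
            using ce[of x] True by simp
          also have "\<dots> = 0" unfolding z by (rule flin_zero[OF coord_flin[OF B]])
          finally show ?thesis by simp
        next
          case False then show ?thesis using ce by simp
        qed
      qed
      then show ?thesis by blast
    qed
  qed
qed


lemma transfer:
  assumes L: "is_lie_algebra n br" and B1: "is_basis n b1" and B2: "is_basis n b2"
    and E: "equiv_nice (Suc n) (brE n br) (extb n b1) (brE n br) (extb n b2)"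
  shows "equiv_nice n br b1 br b2"
proof -
  obtain \<phi> where F: "lie_iso (Suc n) (brE n br) (brE n br) \<phi>"
    and M: "\<forall>i<Suc n. \<exists>k<Suc n. \<exists>c. \<phi> (extb n b1 i) = vscale c (extb n b2 k)"
    using E unfolding equiv_nice_def by blast
  have "\<forall>i. \<exists>p. i < Suc n \<longrightarrow> fst p < Suc n \<and> \<phi> (extb n b1 i) = vscale (snd p) (extb n b2 (fst p))"
    using M by fastforce
  then obtain f where f: "\<forall>i. i < Suc n \<longrightarrow> fst (f i) < Suc n \<and> \<phi> (extb n b1 i) = vscale (snd (f i)) (extb n b2 (fst (f i)))"
    by (rule choice[THEN exE]) blast
  define \<sigma> where "\<sigma> i = fst (f i)" for i
  define c where "c i = snd (f i)" for i
  have S: "\<And>i. i < Suc n \<Longrightarrow> \<sigma> i < Suc n \<and> \<phi> (extb n b1 i) = vscale (c i) (extb n b2 (\<sigma> i))"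
    using f by (simp add: \<sigma>_def c_def)
  note EB1 = extb_basis[OF B1] and EB2 = extb_basis[OF B2]
  note P = iso_perm[OF F EB1 EB2 S]
  have cnz: "c i \<noteq> 0" if "i < Suc n" for i using P that by blast
  have sinj: "\<sigma> i = \<sigma> i' \<Longrightarrow> i < Suc n \<Longrightarrow> i' < Suc n \<Longrightarrow> i = i'" for i i'
    using P by (auto simp: inj_on_def)
  note V = lie_iso_vlin[OF F]
  note LE = brE_lie[OF L]
  have en_V: "en n \<in> Vsp (Suc n)" by (simp add: en_def Vsp_def)
  have phi_hom: "\<phi> (brE n br x y) = brE n br (\<phi> x) (\<phi> y)" if "x \<in> Vsp (Suc n)" "y \<in> Vsp (Suc n)" for x y
    using F that unfolding lie_iso_def by blast
  have phi_V: "\<phi> x \<in> Vsp (Suc n)" if "x \<in> Vsp (Suc n)" for x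
    using F that unfolding lie_iso_def bij_betw_def by blast
  have phi_surj: "\<exists>u'\<in>Vsp (Suc n). \<phi> u' = u" if "u \<in> Vsp (Suc n)" for u
    using F that unfolding lie_iso_def bij_betw_def by (metis imageE)
  define w where "w = (if \<sigma> n < n then b2 (\<sigma> n) else vzero)"
  have wV: "w \<in> Vsp n" using basis_Vsp[OF B2] by (simp add: w_def)
  have wc: "br w u = vzero" if u: "u \<in> Vsp n" for u
  proof (cases "\<sigma> n < n")
    case True
    obtain u' where u': "u' \<in> Vsp (Suc n)" "\<phi> u' = u" using phi_surj[OF Vsp_Suc[OF u]] by blast
    have "brE n br (en n) u' = vzero" unfolding brE_def tr_en by (rule br_zero_l[OF L tr_Vsp])
    then have "\<phi> (brE n br (en n) u') = vzero" using vlin_zero[OF V] by simp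
    then have z: "brE n br (\<phi> (en n)) u = vzero" using phi_hom[OF en_V u'(1)] u'(2) by simp
    have pen: "\<phi> (en n) = vscale (c n) (b2 (\<sigma> n))"
      using S[of n] True by (simp add: extb_def)
    have b2V: "b2 (\<sigma> n) \<in> Vsp n" using basis_Vsp[OF B2 True] .
    have "brE n br (\<phi> (en n)) u = br (vscale (c n) (b2 (\<sigma> n))) u"
      unfolding brE_def pen using tr_id[OF vscale_Vsp[OF b2V]] tr_id[OF u] by simp
    also have "\<dots> = vscale (c n) (br (b2 (\<sigma> n)) u)" by (rule br_scale_l[OF L b2V u])
    finally have "vscale (c n) (br (b2 (\<sigma> n)) u) = vzero" using z by simp
    then show ?thesis using vscale_eq_zero[OF cnz[of n]] True by (simp add: w_def)
  next
    case False
    then show ?thesis using br_zero_l[OF L u] by (simp add: w_def)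
  qed
  have wc2: "br u w = vzero" if u: "u \<in> Vsp n" for u
    using br_antisym[OF L u wV] wc[OF u] by (simp add: fun_eq_iff)
  define \<psi> where "\<psi> x = vadd (tr n (\<phi> x)) (vscale (\<phi> x n) w)" for x
  have psiV: "\<psi> x \<in> Vsp n" if "x \<in> Vsp n" for x
    unfolding \<psi>_def using wV by auto
  have psi_lin: "vlin n \<psi>"
    unfolding vlin_def
  proof (intro allI impI)
    fix a x y assume x: "x \<in> Vsp n" and y: "y \<in> Vsp n"
    have "\<phi> (vadd (vscale a x) y) = vadd (vscale a (\<phi> x)) (\<phi> y)"
      using V Vsp_Suc[OF x] Vsp_Suc[OF y] unfolding vlin_def by blast
    then show "\<psi> (vadd (vscale a x) y) = vadd (vscale a (\<psi> x)) (\<psi> y)"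
      by (simp add: \<psi>_def tr_def fun_eq_iff algebra_simps)
  qed
  have psi_hom: "\<psi> (br x y) = br (\<psi> x) (\<psi> y)" if x: "x \<in> Vsp n" and y: "y \<in> Vsp n" for x y
  proof -
    define X where "X = tr n (\<phi> x)"
    define Y where "Y = tr n (\<phi> y)"
    have XV: "X \<in> Vsp n" "Y \<in> Vsp n" by (simp_all add: X_def Y_def)
    define R where "R = br X Y"
    have RV: "R \<in> Vsp n" unfolding R_def by (rule br_Vsp[OF L XV])
    have "br x y = brE n br x y" unfolding brE_def using tr_id[OF x] tr_id[OF y] by simp
    then have "\<phi> (br x y) = brE n br (\<phi> x) (\<phi> y)" using phi_hom[OF Vsp_Suc[OF x] Vsp_Suc[OF y]] by simp
    also have "\<dots> = R" by (simp add: brE_def R_def X_def Y_def)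
    finally have pb: "\<phi> (br x y) = R" .
    have lhs: "\<psi> (br x y) = R" unfolding \<psi>_def pb tr_id[OF RV] using Vsp_at[OF RV] by (simp add: fun_eq_iff)
    have px: "\<psi> x = vadd X (vscale (\<phi> x n) w)" and py: "\<psi> y = vadd Y (vscale (\<phi> y n) w)"
      by (simp_all add: \<psi>_def X_def Y_def)
    have sw: "vscale (\<phi> x n) w \<in> Vsp n" "vscale (\<phi> y n) w \<in> Vsp n" using wV by auto
    have yv: "vadd Y (vscale (\<phi> y n) w) \<in> Vsp n" using XV sw by auto
    have "br (\<psi> x) (\<psi> y) = vadd (br X (vadd Y (vscale (\<phi> y n) w))) (br (vscale (\<phi> x n) w) (vadd Y (vscale (\<phi> y n) w)))"
      unfolding px py by (rule br_add_l[OF L XV(1) sw(1) yv])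
    also have "br X (vadd Y (vscale (\<phi> y n) w)) = vadd R (br X (vscale (\<phi> y n) w))"
      unfolding R_def by (rule br_add_r[OF L XV(2) sw(2) XV(1)])
    also have "br X (vscale (\<phi> y n) w) = vscale (\<phi> y n) (br X w)" by (rule br_scale_r[OF L wV XV(1)])
    also have "br X w = vzero" by (rule wc2[OF XV(1)])
    also have "br (vscale (\<phi> x n) w) (vadd Y (vscale (\<phi> y n) w)) = vscale (\<phi> x n) (br w (vadd Y (vscale (\<phi> y n) w)))"
      by (rule br_scale_l[OF L wV yv])
    also have "br w (vadd Y (vscale (\<phi> y n) w)) = vzero" by (rule wc[OF yv])
    finally have "br (\<psi> x) (\<psi> y) = R" by (simp add: fun_eq_iff)
    then show ?thesis using lhs by simp
  qed
  define \<pi> where "\<pi> i = (if \<sigma> i = n then \<sigma> n else \<sigma> i)" for i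
  have psi_b: "\<pi> i < n \<and> \<psi> (b1 i) = vscale (c i) (b2 (\<pi> i))" if i: "i < n" for i
  proof -
    have pb: "\<phi> (b1 i) = vscale (c i) (extb n b2 (\<sigma> i))" using S[of i] i by (simp add: extb_def)
    have si: "\<sigma> i < Suc n" using S[of i] i by simp
    show ?thesis
    proof (cases "\<sigma> i = n")
      case False
      then have sl: "\<sigma> i < n" using si by simp
      have bv: "vscale (c i) (b2 (\<sigma> i)) \<in> Vsp n" using basis_Vsp[OF B2 sl] by auto
      have "\<psi> (b1 i) = vscale (c i) (b2 (\<sigma> i))"
        unfolding \<psi>_def pb using sl tr_id[OF bv] Vsp_at[OF bv] by (simp add: extb_def fun_eq_iff)
      then show ?thesis using sl False by (simp add: \<pi>_def)
    next
      case True
      have "\<sigma> n \<noteq> n" using sinj[of n i] True i by auto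
      moreover have "\<sigma> n < Suc n" using S[of n] by simp
      ultimately have sn: "\<sigma> n < n" by simp
      have "\<psi> (b1 i) = vscale (c i) w"
        unfolding \<psi>_def pb using True tr_en by (simp add: extb_def tr_scale en_def fun_eq_iff)
      then show ?thesis using sn True by (simp add: \<pi>_def w_def)
    qed
  qed
  have pinj: "inj_on \<pi> {..<n}"
  proof (rule inj_onI)
    fix i i' assume i: "i \<in> {..<n}" and i': "i' \<in> {..<n}" and e: "\<pi> i = \<pi> i'"
    show "i = i'"
    proof (cases "\<sigma> i = n"; cases "\<sigma> i' = n")
      assume "\<sigma> i = n" "\<sigma> i' = n" then show ?thesis using sinj i i' by simp
    next
      assume a: "\<sigma> i = n" "\<sigma> i' \<noteq> n"
      then have "\<sigma> n = \<sigma> i'" using e by (simp add: \<pi>_def)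
      then have "n = i'" using sinj[of n i'] i' by simp
      then show ?thesis using i' by simp
    next
      assume a: "\<sigma> i \<noteq> n" "\<sigma> i' = n"
      then have "\<sigma> i = \<sigma> n" using e by (simp add: \<pi>_def)
      then have "i = n" using sinj[of i n] i by simp
      then show ?thesis using i by simp
    next
      assume "\<sigma> i \<noteq> n" "\<sigma> i' \<noteq> n"
      then have "\<sigma> i = \<sigma> i'" using e by (simp add: \<pi>_def)
      then show ?thesis using sinj i i' by simp
    qed
  qed
  have psurj: "\<pi> ` {..<n} = {..<n}"
    using psi_b by (intro endo_inj_surj[OF _ _ pinj]) auto
  have bij: "bij_betw \<psi> (Vsp n) (Vsp n)"
    by (rule perm_bij[OF psi_lin B1 B2 _ _ pinj psurj]) (use psi_b cnz in auto)
  have iso: "lie_iso n br br \<psi>"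
    unfolding lie_iso_def using bij psi_lin psi_hom unfolding vlin_def by blast
  show ?thesis unfolding equiv_nice_def
    using iso psi_b by blast
qed


lemma id_iso: "lie_iso n br br id"
  unfolding lie_iso_def by (simp add: bij_betw_id)

lemma mono_step: "max_nice n \<le> max_nice (Suc n)"
  unfolding max_nice_def
proof (rule Sup_subset_mono, rule subsetI)
  fix e assume "e \<in> {enat (card S) | S br.
      is_lie_algebra n br \<and> nilpotent_lie n br \<and> finite S \<and>
      (\<forall>b\<in>S. nice_basis n br b) \<and>
      (\<forall>b1\<in>S. \<forall>b2\<in>S. b1 \<noteq> b2 \<longrightarrow> \<not> equiv_nice n br b1 br b2)}"
  then obtain S br where e: "e = enat (card S)" and L: "is_lie_algebra n br" and N: "nilpotent_lie n br"
    and fin: "finite S" and nice: "\<forall>b\<in>S. nice_basis n br b"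
    and ineq: "\<forall>b1\<in>S. \<forall>b2\<in>S. b1 \<noteq> b2 \<longrightarrow> \<not> equiv_nice n br b1 br b2" by blast
  have inj: "inj_on (extb n) S"
  proof (rule inj_onI)
    fix b1 b2 assume b1: "b1 \<in> S" and b2: "b2 \<in> S" and eq: "extb n b1 = extb n b2"
    show "b1 = b2"
    proof (rule ccontr)
      assume ne: "b1 \<noteq> b2"
      have "\<forall>i<n. \<exists>k<n. \<exists>c. id (b1 i) = vscale c (b2 k)"
      proof (intro allI impI)
        fix i assume i: "i < n"
        have "b1 i = b2 i" using fun_cong[OF eq, of i] i by (simp add: extb_def)
        then have "id (b1 i) = vscale 1 (b2 i)" by (simp add: fun_eq_iff)
        then show "\<exists>k<n. \<exists>c. id (b1 i) = vscale c (b2 k)" using i by blast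
      qed
      then have "equiv_nice n br b1 br b2" unfolding equiv_nice_def using id_iso by blast
      then show False using ineq b1 b2 ne by blast
    qed
  qed
  define S' where "S' = extb n ` S"
  have card: "card S' = card S" unfolding S'_def by (rule card_image[OF inj])
  show "e \<in> {enat (card S) | S br.
      is_lie_algebra (Suc n) br \<and> nilpotent_lie (Suc n) br \<and> finite S \<and>
      (\<forall>b\<in>S. nice_basis (Suc n) br b) \<and>
      (\<forall>b1\<in>S. \<forall>b2\<in>S. b1 \<noteq> b2 \<longrightarrow> \<not> equiv_nice (Suc n) br b1 br b2)}"
  proof (intro CollectI exI conjI)
    show "e = enat (card S')" using e card by simp
    show "is_lie_algebra (Suc n) (brE n br)" by (rule brE_lie[OF L])
    show "nilpotent_lie (Suc n) (brE n br)" by (rule brE_nil[OF L N])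
    show "finite S'" using fin by (simp add: S'_def)
    show "\<forall>b\<in>S'. nice_basis (Suc n) (brE n br) b" using nice nice_ext[OF L] by (auto simp: S'_def)
    show "\<forall>b1\<in>S'. \<forall>b2\<in>S'. b1 \<noteq> b2 \<longrightarrow> \<not> equiv_nice (Suc n) (brE n br) b1 (brE n br) b2"
    proof (intro ballI impI)
      fix b1' b2' assume "b1' \<in> S'" "b2' \<in> S'" "b1' \<noteq> b2'"
      then obtain b1 b2 where bb: "b1 \<in> S" "b2 \<in> S" "b1' = extb n b1" "b2' = extb n b2" "b1 \<noteq> b2"
        by (auto simp: S'_def)
      have B1: "is_basis n b1" and B2: "is_basis n b2" using nice bb by (auto simp: nice_basis_def)
      show "\<not> equiv_nice (Suc n) (brE n br) b1' (brE n br) b2'"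
        using transfer[OF L B1 B2] ineq bb by blast
    qed
  qed
qed

theorem mainTheorem1:
  shows "mono max_nice \<and> (\<forall>m::nat. \<exists>n. enat m < max_nice n) \<and>
         (\<forall>n. enat (n div 6 + 1) \<le> max_nice n)"
proof -
  have M: "mono max_nice" unfolding mono_iff_le_Suc using mono_step by blast
  have U: "\<forall>m::nat. \<exists>n. enat m < max_nice n"
  proof
    fix m :: nat
    have "enat m < enat (m + 1)" by simp
    also have "\<dots> \<le> max_nice (6*m)" by (rule lower_6k)
    finally show "\<exists>n. enat m < max_nice n" by blast
  qed
  have Lo: "\<forall>n. enat (n div 6 + 1) \<le> max_nice n"
  proof
    fix n :: nat
    have "enat (n div 6 + 1) \<le> max_nice (6 * (n div 6))" by (rule lower_6k)
    also have "\<dots> \<le> max_nice n" by (rule monoD[OF M]) simp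
    finally show "enat (n div 6 + 1) \<le> max_nice n" .
  qed
  show ?thesis using M U Lo by blast
qed


end
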